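(* The natural map $\iota:\mathrm{Aut}(W_3)\to\mathrm{Aut}(\ker\epsilon)\cong\mathrm{Aut}(F_2)$ is an isomorphism.
   Context: $W_3=\langle s_1,s_2,s_3\mid s_1^2,s_2^2,s_3^2\rangle$. Let $\epsilon:W_3\to\{-1,1\}$ be the homomorphism sending each $s_i$ to $-1$. Its kernel is a characteristic subgroup of $W_3$, free of rank $2$ with basis $x_1=s_1s_2$, $x_2=s_2s_3$; $\iota$ sends an automorphism of $W_3$ to its restriction to $\ker\epsilon$, and $\ker\epsilon$ is identified with the free group $F_2$ via this basis. *)

theory Defs
  imports "HOL-Algebra.Bij"
begin

text \<open>The Coxeter group W_3 = <s1,s2,s3 | s1^2, s2^2, s3^2>, the free product of three
copies of Z/2, realised by its normal forms: words in the generators with no two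
consecutive equal letters; multiplication is concatenation followed by free cancellation
of adjacent equal letters.\<close>

datatype gen = S1 | S2 | S3

fun push :: "gen \<Rightarrow> gen list \<Rightarrow> gen list" where
  "push a [] = [a]"
| "push a (b # w) = (if a = b then w else a # b # w)"

fun reduced :: "gen list \<Rightarrow> bool" where
  "reduced [] = True"
| "reduced [a] = True"
| "reduced (a # b # w) = (a \<noteq> b \<and> reduced (b # w))"

definition W3 :: "gen list monoid" where
  "W3 = \<lparr>carrier = {w. reduced w}, mult = (\<lambda>u v. foldr push u v), one = []\<rparr>"

definition s :: "gen \<Rightarrow> gen list" where "s a = [a]"

definition eps :: "gen list \<Rightarrow> int" where "eps w = (-1) ^ length w"

definition ker_eps :: "gen list set" where
  "ker_eps = {w \<in> carrier W3. eps w = 1}"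

text \<open>The natural map iota: restriction of an automorphism to ker epsilon
(as an extensional function, matching the convention of AutoGroup).\<close>
definition iota :: "(gen list \<Rightarrow> gen list) \<Rightarrow> (gen list \<Rightarrow> gen list)" where
  "iota \<phi> = restrict \<phi> ker_eps"

end

theory Submission
  imports Defs
begin


lemma reduced_Cons: "reduced (a # w) \<Longrightarrow> reduced w"
  by (cases w) auto

lemma reduced_Cons_iff: "reduced (a # w) \<longleftrightarrow> reduced w \<and> (w = [] \<or> hd w \<noteq> a)"
  by (cases w) auto

lemma reduced_append: "reduced (u @ v) \<Longrightarrow> reduced u \<and> reduced v"
  by (induction u rule: reduced.induct) (auto simp: reduced_Cons_iff)

lemma reduced_push: "reduced w \<Longrightarrow> reduced (push a w)"
  by (cases w) (auto simp: reduced_Cons_iff)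

lemma push_push: "reduced w \<Longrightarrow> push a (push a w) = w"
  by (cases w; cases "tl w") (auto simp: reduced_Cons_iff)

lemma reduced_foldr: "reduced v \<Longrightarrow> reduced (foldr push u v)"
  by (induction u) (auto simp: reduced_push)

lemma foldr_push_push: "reduced x \<Longrightarrow> foldr push (push a r) x = push a (foldr push r x)"
proof (cases r)
  case (Cons b r')
  assume x: "reduced x"
  show ?thesis
  proof (cases "a = b")
    case True
    then show ?thesis using Cons push_push[OF reduced_foldr[OF x]] by simp
  qed (use Cons in simp)
qed simp

lemma mul_assoc_raw: "reduced x \<Longrightarrow> foldr push (foldr push u v) x = foldr push u (foldr push v x)"
  by (induction u) (auto simp: foldr_push_push reduced_foldr)

lemma mul_rev: "reduced w \<Longrightarrow> foldr push (rev w) w = []"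
proof (induction w)
  case (Cons a w)
  then show ?case using reduced_Cons[OF Cons.prems] by simp
qed simp

lemma mul_concat: "reduced (u @ v) \<Longrightarrow> foldr push u v = u @ v"
proof (induction u)
  case (Cons a u)
  have "reduced (u @ v)" using Cons.prems reduced_Cons by auto
  with Cons show ?case by (cases "u @ v") (auto simp: reduced_Cons_iff)
qed simp

lemma mul_Nil_right: "reduced u \<Longrightarrow> foldr push u [] = u"
  using mul_concat[of u "[]"] by simp

lemma reduced_snoc: "reduced (w @ [a]) \<longleftrightarrow> reduced w \<and> (w = [] \<or> last w \<noteq> a)"
  by (induction w rule: reduced.induct) auto

lemma reduced_rev: "reduced w \<Longrightarrow> reduced (rev w)"
  by (induction w) (auto simp: reduced_Cons_iff reduced_snoc last_rev hd_rev)

lemma reduced_nth: "reduced w \<longleftrightarrow> (\<forall>i. Suc i < length w \<longrightarrow> w!i \<noteq> w!Suc i)"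
proof (induction w rule: reduced.induct)
  case (3 a b w)
  show ?case
    apply (simp add: 3)
    apply (rule iffI)
     apply (auto simp: nth_Cons split: nat.splits)[1]
    apply (metis Suc_less_eq length_Cons nth_Cons_Suc zero_less_Suc nth_Cons_0)
    done
qed auto


lemma carrier_W3[simp]: "carrier W3 = {w. reduced w}"
  and mult_W3[simp]: "mult W3 = (\<lambda>u v. foldr push u v)"
  and one_W3[simp]: "one W3 = []"
  by (simp_all add: W3_def)

lemma group_W3: "group W3"
  apply (rule groupI)
  apply (auto simp: reduced_foldr mul_assoc_raw)
  apply (metis mul_rev reduced_rev)
  done

lemma inv_W3[simp]: "reduced w \<Longrightarrow> inv\<^bsub>W3\<^esub> w = rev w"
  by (rule group.inv_equality[OF group_W3]) (auto simp: mul_rev reduced_rev)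

lemma mul_rev2: "reduced w \<Longrightarrow> foldr push w (rev w) = []"
  using mul_rev[of "rev w"] reduced_rev[of w] by simp

lemma even_push: "even (length (push a w)) \<longleftrightarrow> odd (length w)"
  by (cases w) auto

lemma even_mul: "even (length (foldr push u v)) \<longleftrightarrow> even (length u + length v)"
proof (induction u)
  case (Cons a u)
  then show ?case by (simp add: even_push)
qed simp

lemma eps_mul: "eps (foldr push u v) = eps u * eps v"
  unfolding eps_def using even_mul[of u v]
  by (simp add: power_add minus_one_power_iff)

lemma eps_eq_1: "eps w = 1 \<longleftrightarrow> even (length w)"
  by (simp add: eps_def minus_one_power_iff)

lemma ker_eps_alt: "ker_eps = {w. reduced w \<and> even (length w)}"
  by (auto simp: ker_eps_def eps_eq_1)

lemma subgroup_K: "subgroup ker_eps W3"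
  apply (rule subgroup.intro)
  apply (auto simp: ker_eps_alt reduced_foldr even_mul reduced_rev)
  done

fun lcp :: "gen list \<Rightarrow> gen list \<Rightarrow> nat" where
  "lcp (a # x) (b # y) = (if a = b then Suc (lcp x y) else 0)"
| "lcp _ _ = 0"

lemma lcp_le: "lcp x y \<le> length x" "lcp x y \<le> length y"
  by (induction x y rule: lcp.induct) auto

lemma lcp_take: "take (lcp x y) x = take (lcp x y) y"
  by (induction x y rule: lcp.induct) auto

lemma lcp_ge: "k \<le> length x \<Longrightarrow> k \<le> length y \<Longrightarrow> take k x = take k y \<Longrightarrow> k \<le> lcp x y"
proof (induction x y arbitrary: k rule: lcp.induct)
  case (1 a x b y)
  then show ?case by (cases k) auto
qed auto

lemma lcp_sym: "lcp x y = lcp y x"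
  by (induction x y rule: lcp.induct) auto

lemma lcp_neq: "lcp x y < length x \<Longrightarrow> lcp x y < length y \<Longrightarrow> x ! lcp x y \<noteq> y ! lcp x y"
  by (induction x y rule: lcp.induct) auto

lemma cancel:
  assumes "reduced u" "reduced v"
  shows "foldr push u v = take (length u - lcp (rev u) v) u @ drop (lcp (rev u) v) v"
  using assms
proof (induction u arbitrary: v rule: rev_induct)
  case (snoc a u)
  have ru: "reduced u" using snoc.prems reduced_append by blast
  show ?case
  proof (cases "v \<noteq> [] \<and> hd v = a")
    case True
    then obtain v' where v: "v = a # v'" by (cases v) auto
    have "reduced v'" using snoc.prems v reduced_Cons by blast
    then show ?thesis using snoc.IH[OF ru] v by simp
  next
    case False
    then have l: "lcp (rev (u @ [a])) v = 0" by (cases v) auto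
    have "push a v = a # v" using False by (cases v) auto
    moreover have "reduced (u @ a # v)"
    proof -
      have "reduced (a # v)" using snoc.prems False by (auto simp: reduced_Cons_iff)
      then show ?thesis using snoc.prems(1)
        by (induction u rule: reduced.induct) (auto simp: reduced_snoc reduced_Cons_iff)
    qed
    ultimately show ?thesis using l mul_concat[of u "a # v"] by simp
  qed
qed simp

lemma length_cancel:
  assumes "reduced u" "reduced v"
  shows "length (foldr push u v) + 2 * lcp (rev u) v = length u + length v"
  using cancel[OF assms] lcp_le[of "rev u" v] by simp

lemma palin:
  assumes "reduced b" "length b = 2 * m" "m > 0"
  shows "lcp (rev b) b < m"
proof (rule ccontr)
  assume "\<not> ?thesis"
  then have ml: "m \<le> lcp (rev b) b" by simp
  have "take m (rev b) = take m (take (lcp (rev b) b) (rev b))" using ml by (simp add: min_def)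
  also have "\<dots> = take m (take (lcp (rev b) b) b)" by (simp only: lcp_take)
  also have "\<dots> = take m b" using ml by (simp add: min_def)
  finally have tk: "take m (rev b) = take m b" .
  have "take m (rev b) ! (m - 1) = rev b ! (m - 1)" using assms(3) by (intro nth_take) simp
  moreover have "take m b ! (m - 1) = b ! (m - 1)" using assms(3) by (intro nth_take) simp
  ultimately have e1: "rev b ! (m - 1) = b ! (m - 1)" using tk by simp
  have "rev b ! (m - 1) = b ! (length b - Suc (m - 1))" using assms by (intro rev_nth) simp
  also have "length b - Suc (m - 1) = Suc (m - 1)" using assms by simp
  finally have "b ! (m - 1) = b ! Suc (m - 1)" using e1 by simp
  moreover have "Suc (m - 1) < length b" using assms by simp
  ultimately show False using assms(1) reduced_nth[of b] by blast
qed


abbreviation "K' \<equiv> W3\<lparr>carrier := ker_eps\<rparr>"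

lemma odd_invol:
  assumes "reduced g" "foldr push g g = []" "g \<noteq> []"
  shows "odd (length g)"
proof
  assume "even (length g)"
  then obtain m where m: "length g = 2 * m" by auto
  have "m > 0" using m assms(3) by (cases m) auto
  have "lcp (rev g) g = length g" using length_cancel[OF assms(1) assms(1)] assms(2) by simp
  with palin[OF assms(1) m \<open>m > 0\<close>] m show False by simp
qed

locale autW =
  fixes \<phi>
  assumes aut: "\<phi> \<in> auto W3"
begin

lemma hom: "\<phi> \<in> hom W3 W3" using aut by (simp add: auto_def)
lemma bij: "bij_betw \<phi> {w. reduced w} {w. reduced w}" using aut by (simp add: auto_def Bij_def)
lemma ext: "\<phi> \<in> extensional {w. reduced w}" using aut by (simp add: auto_def Bij_def)

lemma red: "reduced w \<Longrightarrow> reduced (\<phi> w)"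
  using hom by (auto simp: hom_def)

lemma mul: "reduced u \<Longrightarrow> reduced v \<Longrightarrow> \<phi> (foldr push u v) = foldr push (\<phi> u) (\<phi> v)"
  using hom_mult[OF hom, of u v] by simp

lemma one: "\<phi> [] = []"
  using hom_one[OF hom group_W3 group_W3] by simp

lemma inj: "reduced u \<Longrightarrow> reduced v \<Longrightarrow> \<phi> u = \<phi> v \<Longrightarrow> u = v"
  using bij by (auto simp: bij_betw_def inj_on_def)

lemma surj: "reduced w \<Longrightarrow> \<exists>u. reduced u \<and> \<phi> u = w"
  using bij unfolding bij_betw_def by (metis (mono_tags, lifting) imageE mem_Collect_eq)

lemma gen_odd: "odd (length (\<phi> [a]))"
proof (rule odd_invol)
  show "reduced (\<phi> [a])" by (rule red) simp
  have "foldr push (\<phi> [a]) (\<phi> [a]) = \<phi> (foldr push [a] [a])" by (rule mul[symmetric]) auto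
  then show "foldr push (\<phi> [a]) (\<phi> [a]) = []" by (simp add: one)
  show "\<phi> [a] \<noteq> []" using inj[of "[a]" "[]"] one by auto
qed

lemma even_pres: "reduced w \<Longrightarrow> even (length (\<phi> w)) \<longleftrightarrow> even (length w)"
proof (induction w)
  case Nil then show ?case by (simp add: one)
next
  case (Cons a w)
  have rw: "reduced w" using Cons.prems reduced_Cons by blast
  have "a # w = foldr push [a] w" using Cons.prems by (cases w) auto
  then have "\<phi> (a # w) = foldr push (\<phi> [a]) (\<phi> w)" using mul[of "[a]" w] rw by simp
  then show ?case using Cons.IH[OF rw] gen_odd[of a] by (simp add: even_mul)
qed

lemma K_pres: "w \<in> ker_eps \<longleftrightarrow> \<phi> w \<in> ker_eps" if "reduced w"
  using that even_pres red by (auto simp: ker_eps_alt)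

lemma iota_auto: "iota \<phi> \<in> auto K'"
proof -
  have "iota \<phi> \<in> hom K' K'"
    unfolding hom_def iota_def using K_pres
    by (auto simp: ker_eps_alt mul reduced_foldr even_mul)
  moreover have "bij_betw (iota \<phi>) ker_eps ker_eps"
  proof -
    have "bij_betw \<phi> ker_eps ker_eps"
      unfolding bij_betw_def
    proof
      show "inj_on \<phi> ker_eps" using inj by (auto simp: inj_on_def ker_eps_alt)
      show "\<phi> ` ker_eps = ker_eps"
      proof
        show "\<phi> ` ker_eps \<subseteq> ker_eps" using K_pres by (auto simp: ker_eps_alt)
        show "ker_eps \<subseteq> \<phi> ` ker_eps"
        proof
          fix w assume w: "w \<in> ker_eps"
          then obtain u where u: "reduced u" "\<phi> u = w" using surj by (auto simp: ker_eps_alt)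
          then have "u \<in> ker_eps" using K_pres w by auto
          with u show "w \<in> \<phi> ` ker_eps" by auto
        qed
      qed
    qed
    then show ?thesis unfolding iota_def by (rule bij_betw_restrict_eq[THEN iffD2])
  qed
  ultimately show ?thesis by (simp add: auto_def Bij_def iota_def)
qed

end

lemma autW_iff: "autW \<phi> \<longleftrightarrow> \<phi> \<in> auto W3" by (simp add: autW_def)

lemma iota_hom: "iota \<in> hom (AutoGroup W3) (AutoGroup K')"
proof (rule homI)
  fix \<phi> assume "\<phi> \<in> carrier (AutoGroup W3)"
  then interpret autW \<phi> by (simp add: AutoGroup_def autW_def)
  show "iota \<phi> \<in> carrier (AutoGroup K')" using iota_auto by (simp add: AutoGroup_def)
next
  fix \<phi> \<psi> assume a: "\<phi> \<in> carrier (AutoGroup W3)" "\<psi> \<in> carrier (AutoGroup W3)"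
  then interpret f: autW \<phi> by (simp add: AutoGroup_def autW_def)
  interpret g: autW \<psi> using a by (simp add: AutoGroup_def autW_def)
  have B: "\<phi> \<in> Bij {w. reduced w}" "\<psi> \<in> Bij {w. reduced w}"
    using f.aut g.aut by (auto simp: auto_def)
  have B2: "iota \<phi> \<in> Bij ker_eps" "iota \<psi> \<in> Bij ker_eps"
    using f.iota_auto g.iota_auto by (auto simp: auto_def)
  have "iota (compose {w. reduced w} \<phi> \<psi>) = compose ker_eps (iota \<phi>) (iota \<psi>)"
    unfolding iota_def compose_def
    by (rule ext) (auto simp: ker_eps_alt g.even_pres g.red)
  then show "iota (\<phi> \<otimes>\<^bsub>AutoGroup W3\<^esub> \<psi>) = iota \<phi> \<otimes>\<^bsub>AutoGroup K'\<^esub> iota \<psi>"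
    using B B2 by (simp add: AutoGroup_def BijGroup_def)
qed


lemma exists_other: "\<exists>i::gen. i \<noteq> x \<and> i \<noteq> y"
  by (cases x; cases y) (auto intro: exI[of _ S1] exI[of _ S2] exI[of _ S3])

lemma no_central_invert:
  assumes "reduced h" "\<And>i. foldr push [i] (foldr push h [i]) = rev h"
  shows "h = []"
proof (rule ccontr)
  assume "h \<noteq> []"
  obtain i where i: "i \<noteq> hd h" "i \<noteq> last h" using exists_other by blast
  have r1: "reduced (h @ [i])" using assms(1) i by (simp add: reduced_snoc)
  have "foldr push h [i] = h @ [i]" using mul_concat[OF r1] .
  moreover have "reduced ([i] @ h @ [i])" using r1 i \<open>h \<noteq> []\<close>
    by (cases h) (auto simp: reduced_Cons_iff)
  ultimately have "foldr push [i] (foldr push h [i]) = i # h @ [i]"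
    using mul_concat[of "[i]" "h @ [i]"] by simp
  then have "length (rev h) = length h + 2" using assms(2)[of i] by simp
  then show False by simp
qed

abbreviation mw (infixl "\<cdot>" 70) where "u \<cdot> v \<equiv> u \<otimes>\<^bsub>W3\<^esub> v"

interpretation W: group W3 by (rule group_W3)

lemma iota_inj_aux:
  assumes f: "autW \<phi>" and g: "autW \<psi>" and eq: "\<And>k. k \<in> ker_eps \<Longrightarrow> \<phi> k = \<psi> k"
  shows "\<phi> = \<psi>"
proof -
  interpret f: autW \<phi> by (rule f)
  interpret g: autW \<psi> by (rule g)
  have hf: "\<phi> (u \<cdot> v) = \<phi> u \<cdot> \<phi> v" if "reduced u" "reduced v" for u v
    using f.mul that by simp
  have hg: "\<psi> (u \<cdot> v) = \<psi> u \<cdot> \<psi> v" if "reduced u" "reduced v" for u v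
    using g.mul that by simp
  have ca: "\<phi> [i] \<in> carrier W3" "\<psi> [i] \<in> carrier W3" for i
    using f.red g.red by auto
  have inva: "\<phi> [i] \<cdot> \<phi> [i] = \<one>\<^bsub>W3\<^esub>" "\<psi> [i] \<cdot> \<psi> [i] = \<one>\<^bsub>W3\<^esub>" for i
    using hf[of "[i]" "[i]"] hg[of "[i]" "[i]"] f.one g.one by simp_all
  have pair: "\<phi> [S1] \<cdot> \<phi> [i] = \<psi> [S1] \<cdot> \<psi> [i]" for i
  proof (cases "i = S1")
    case True then show ?thesis using inva by simp
  next
    case False
    then have "[S1] \<cdot> [i] \<in> ker_eps" by (cases i) (auto simp: ker_eps_alt)
    then show ?thesis using eq hf hg by (metis reduced.simps(2))
  qed
  define gg where "gg = \<phi> [S1] \<cdot> \<psi> [S1]"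
  have ggc: "gg \<in> carrier W3" unfolding gg_def using ca by (simp add: reduced_foldr)
  have ai: "\<phi> [i] = gg \<cdot> \<psi> [i]" for i
  proof -
    have "\<phi> [i] = \<phi> [S1] \<cdot> (\<phi> [S1] \<cdot> \<phi> [i])"
      using inva ca by (simp add: mul_assoc_raw[symmetric])
    also have "\<dots> = gg \<cdot> \<psi> [i]" unfolding gg_def using pair[of i] ca by (simp add: mul_assoc_raw)
    finally show ?thesis .
  qed
  obtain h where h: "reduced h" "\<psi> h = gg" using g.surj ggc by auto
  have hc: "h \<in> carrier W3" using h by simp
  have "h = []"
  proof (rule no_central_invert[OF h(1)])
    fix i
    have "\<psi> ((h \<cdot> [i]) \<cdot> (h \<cdot> [i])) = (gg \<cdot> \<psi> [i]) \<cdot> (gg \<cdot> \<psi> [i])"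
      using hg h by (simp add: reduced_foldr)
    also have "\<dots> = \<one>\<^bsub>W3\<^esub>" by (simp only: ai[symmetric] inva(1))
    finally have "(h \<cdot> [i]) \<cdot> (h \<cdot> [i]) = \<one>\<^bsub>W3\<^esub>"
      using g.inj[of "(h \<cdot> [i]) \<cdot> (h \<cdot> [i])" "[]"] g.one h by (simp add: reduced_foldr)
    then have e: "foldr push h (foldr push [i] (foldr push h [i])) = []"
      using h mul_assoc_raw[of "foldr push h [i]" h "[i]"] by (simp add: reduced_foldr)
    have ry: "reduced (foldr push [i] (foldr push h [i]))" by (intro reduced_foldr) simp
    have "rev h = foldr push (rev h) (foldr push h (foldr push [i] (foldr push h [i])))"
      using e h by (simp add: mul_Nil_right reduced_rev)
    also have "\<dots> = foldr push (foldr push (rev h) h) (foldr push [i] (foldr push h [i]))"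
      using ry by (simp add: mul_assoc_raw)
    also have "\<dots> = foldr push [i] (foldr push h [i])" using h by (simp add: mul_rev)
    finally show "foldr push [i] (foldr push h [i]) = rev h" by simp
  qed
  then have gg1: "gg = []" using h g.one by simp
  have gen: "\<phi> [i] = \<psi> [i]" for i using ai[of i] gg1 ca by simp
  show ?thesis
  proof
    fix w
    show "\<phi> w = \<psi> w"
    proof (cases "reduced w")
      case False
      then show ?thesis using f.ext g.ext by (simp add: extensional_def)
    next
      case True
      then show ?thesis
      proof (induction w)
        case Nil then show ?case using f.one g.one by simp
      next
        case (Cons a w)
        have rw: "reduced w" using Cons.prems reduced_Cons by blast
        have "a # w = foldr push [a] w" using Cons.prems by (cases w) auto
        then show ?case using f.mul[of "[a]" w] g.mul[of "[a]" w] rw Cons.IH gen by simp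
      qed
    qed
  qed
qed

lemma iota_inj: "inj_on iota (auto W3)"
proof (rule inj_onI)
  fix \<phi> \<psi> assume a: "\<phi> \<in> auto W3" "\<psi> \<in> auto W3" "iota \<phi> = iota \<psi>"
  show "\<phi> = \<psi>"
  proof (rule iota_inj_aux)
    show "autW \<phi>" "autW \<psi>" using a by (simp_all add: autW_def)
    fix k assume "k \<in> ker_eps"
    then show "\<phi> k = \<psi> k" using fun_cong[OF a(3), of k] by (simp add: iota_def)
  qed
qed


declare mult_W3[simp del] inv_W3[simp del]

lemma red_m[simp]: "reduced x \<Longrightarrow> reduced y \<Longrightarrow> reduced (x \<cdot> y)"
  by (simp add: mult_W3 reduced_foldr)
lemma red_inv[simp]: "reduced x \<Longrightarrow> reduced (inv\<^bsub>W3\<^esub> x)"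
  by (simp add: inv_W3 reduced_rev)
lemma m_Nil[simp]: "[] \<cdot> x = x" "reduced x \<Longrightarrow> x \<cdot> [] = x"
  by (simp_all add: mult_W3 mul_Nil_right)

lemma Kc: "k \<in> ker_eps \<Longrightarrow> k \<in> carrier W3" by (simp add: ker_eps_alt)

lemma even_m: "reduced u \<Longrightarrow> reduced v \<Longrightarrow> even (length (u \<cdot> v)) \<longleftrightarrow> (even (length u) \<longleftrightarrow> even (length v))"
  by (simp add: mult_W3 even_mul)

lemma K_mem: "k \<in> ker_eps \<longleftrightarrow> k \<in> carrier W3 \<and> even (length k)"
  by (simp add: ker_eps_alt)

lemma s2c[simp]: "[S2] \<in> carrier W3" by simp
lemma s2s2[simp]: "[S2] \<cdot> ([S2] \<cdot> x) = x" if "x \<in> carrier W3"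
proof -
  have "[S2] \<cdot> ([S2] \<cdot> x) = ([S2] \<cdot> [S2]) \<cdot> x" using that by (simp add: W.m_assoc)
  also have "[S2] \<cdot> [S2] = \<one>\<^bsub>W3\<^esub>" by (simp add: mult_W3)
  finally show ?thesis using that by simp
qed
lemma s2s2'[simp]: "[S2] \<cdot> [S2] = []" by (simp add: mult_W3)
lemma inv_s2[simp]: "inv\<^bsub>W3\<^esub> [S2] = [S2]" by (simp add: inv_W3)

lemma conjK: "k \<in> ker_eps \<Longrightarrow> [S2] \<cdot> k \<cdot> [S2] \<in> ker_eps"
  by (simp add: K_mem even_m)

locale autK =
  fixes \<alpha>
  assumes aut: "\<alpha> \<in> auto K'"
begin

lemma homK: "\<alpha> \<in> hom K' K'" using aut by (simp add: auto_def)
lemma bijK: "bij_betw \<alpha> ker_eps ker_eps" using aut by (simp add: auto_def Bij_def)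
lemma extK: "\<alpha> \<in> extensional ker_eps" using aut by (simp add: auto_def Bij_def)
lemma closed: "k \<in> ker_eps \<Longrightarrow> \<alpha> k \<in> ker_eps" using homK by (auto simp: hom_def)
lemma mul: "k \<in> ker_eps \<Longrightarrow> l \<in> ker_eps \<Longrightarrow> \<alpha> (k \<cdot> l) = \<alpha> k \<cdot> \<alpha> l"
  using hom_mult[OF homK, of k l] by simp
lemma grpK: "group K'" by (rule subgroup.subgroup_is_group[OF subgroup_K group_W3])
lemma gh: "group_hom K' K' \<alpha>" by (simp add: group_hom_def group_hom_axioms_def grpK homK)
lemma one: "\<alpha> \<one>\<^bsub>W3\<^esub> = \<one>\<^bsub>W3\<^esub>" using group_hom.hom_one[OF gh] by simp
lemma inv: "k \<in> ker_eps \<Longrightarrow> \<alpha> (inv\<^bsub>W3\<^esub> k) = inv\<^bsub>W3\<^esub> (\<alpha> k)"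
  using group_hom.hom_inv[OF gh, of k] closed[of k]
  by (simp add: W.m_inv_consistent[OF subgroup_K])
lemma inj: "k \<in> ker_eps \<Longrightarrow> l \<in> ker_eps \<Longrightarrow> \<alpha> k = \<alpha> l \<Longrightarrow> k = l"
  using bijK by (auto simp: bij_betw_def inj_on_def)
lemma surj: "k \<in> ker_eps \<Longrightarrow> \<exists>l \<in> ker_eps. \<alpha> l = k"
  using bijK unfolding bij_betw_def by (metis imageE)

end

lemma K_induct[consumes 1, case_names Nil Step]:
  assumes "k \<in> ker_eps" "P []"
    "\<And>a b k. a \<noteq> b \<Longrightarrow> k \<in> ker_eps \<Longrightarrow> P k \<Longrightarrow> P ([a, b] \<cdot> k)"
  shows "P k"
  using assms(1)
proof (induction k rule: length_induct)
  case (1 k)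
  show ?case
  proof (cases k)
    case Nil then show ?thesis using assms(2) by simp
  next
    case (Cons a k1)
    then obtain b k' where k: "k = a # b # k'" using "1.prems" by (cases k1) (auto simp: K_mem)
    have red: "reduced k" using "1.prems" by (simp add: K_mem)
    then have ab: "a \<noteq> b" and rk: "reduced k'" using k reduced_Cons by auto
    have k'K: "k' \<in> ker_eps" using "1.prems" k rk by (simp add: K_mem)
    have "[a, b] \<cdot> k' = k" using red k mul_concat[of "[a,b]" k'] by (simp add: mult_W3)
    moreover have "P k'" using "1.IH" k k'K by auto
    ultimately show ?thesis using assms(3)[OF ab k'K] by simp
  qed
qed

definition xa :: "gen list" where "xa = [S1, S2]"
definition xb :: "gen list" where "xb = [S2, S3]"

lemma xa_K[simp]: "xa \<in> ker_eps" and xb_K[simp]: "xb \<in> ker_eps"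
  by (simp_all add: xa_def xb_def K_mem)

lemma pairs: "a \<noteq> b \<Longrightarrow> [a, b] \<in> {xa, xb, inv\<^bsub>W3\<^esub> xa, inv\<^bsub>W3\<^esub> xb, xa \<cdot> xb,
   inv\<^bsub>W3\<^esub> xb \<cdot> inv\<^bsub>W3\<^esub> xa}"
  by (cases a; cases b) (simp_all add: xa_def xb_def inv_W3 mult_W3)

lemma s2_xa: "[S2] \<cdot> xa \<cdot> [S2] = inv\<^bsub>W3\<^esub> xa" and s2_xb: "[S2] \<cdot> xb \<cdot> [S2] = inv\<^bsub>W3\<^esub> xb"
  by (simp_all add: xa_def xb_def inv_W3 mult_W3)

context
  fixes \<alpha> t
  assumes A: "autK \<alpha>" and tc: "t \<in> carrier W3" and tt: "t \<cdot> t = \<one>\<^bsub>W3\<^esub>"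
    and ta: "t \<cdot> \<alpha> xa \<cdot> t = inv\<^bsub>W3\<^esub> (\<alpha> xa)" and tb: "t \<cdot> \<alpha> xb \<cdot> t = inv\<^bsub>W3\<^esub> (\<alpha> xb)"
begin

interpretation a: autK \<alpha> by (rule A)

lemma ttx[simp]: "x \<in> carrier W3 \<Longrightarrow> t \<cdot> (t \<cdot> x) = x"
  using tt tc by (simp add: W.m_assoc[symmetric])

lemma inv_t[simp]: "inv\<^bsub>W3\<^esub> t = t"
  using tt tc W.inv_equality by blast

lemma aK[simp]: "k \<in> ker_eps \<Longrightarrow> reduced (\<alpha> k)" using a.closed Kc by fastforce
lemma tt'[simp]: "t \<cdot> t = []" using tt by simp
lemma tr[simp]: "reduced t" using tc by simp

definition C where "C k \<longleftrightarrow> \<alpha> ([S2] \<cdot> k \<cdot> [S2]) = t \<cdot> \<alpha> k \<cdot> t"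

lemma C_mult: "k \<in> ker_eps \<Longrightarrow> l \<in> ker_eps \<Longrightarrow> C k \<Longrightarrow> C l \<Longrightarrow> C (k \<cdot> l)"
proof -
  assume k: "k \<in> ker_eps" and l: "l \<in> ker_eps" and "C k" "C l"
  have kc: "k \<in> carrier W3" and lc: "l \<in> carrier W3" using k l Kc by auto
  have "[S2] \<cdot> (k \<cdot> l) \<cdot> [S2] = ([S2] \<cdot> k \<cdot> [S2]) \<cdot> ([S2] \<cdot> l \<cdot> [S2])"
    using kc lc by (simp add: W.m_assoc)
  then have "\<alpha> ([S2] \<cdot> (k \<cdot> l) \<cdot> [S2]) = \<alpha> ([S2] \<cdot> k \<cdot> [S2]) \<cdot> \<alpha> ([S2] \<cdot> l \<cdot> [S2])"
    using a.mul[OF conjK[OF k] conjK[OF l]] by simp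
  also have "\<dots> = (t \<cdot> \<alpha> k \<cdot> t) \<cdot> (t \<cdot> \<alpha> l \<cdot> t)" using \<open>C k\<close> \<open>C l\<close> by (simp add: C_def)
  also have "\<dots> = t \<cdot> \<alpha> (k \<cdot> l) \<cdot> t" using k l tc by (simp add: a.mul W.m_assoc)
  finally show "C (k \<cdot> l)" by (simp add: C_def)
qed

lemma C_inv: "k \<in> ker_eps \<Longrightarrow> C k \<Longrightarrow> C (inv\<^bsub>W3\<^esub> k)"
proof -
  assume k: "k \<in> ker_eps" and "C k"
  have kc: "k \<in> carrier W3" using k Kc by auto
  have ik: "inv\<^bsub>W3\<^esub> k \<in> ker_eps" using k subgroup.m_inv_closed[OF subgroup_K] by blast
  have "[S2] \<cdot> inv\<^bsub>W3\<^esub> k \<cdot> [S2] = inv\<^bsub>W3\<^esub> ([S2] \<cdot> k \<cdot> [S2])"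
    using kc by (simp add: W.inv_mult_group W.m_assoc)
  then have "\<alpha> ([S2] \<cdot> inv\<^bsub>W3\<^esub> k \<cdot> [S2]) = inv\<^bsub>W3\<^esub> (t \<cdot> \<alpha> k \<cdot> t)"
    using a.inv[OF conjK[OF k]] \<open>C k\<close> by (simp add: C_def)
  also have "\<dots> = t \<cdot> \<alpha> (inv\<^bsub>W3\<^esub> k) \<cdot> t" using k tc by (simp add: a.inv W.inv_mult_group W.m_assoc)
  finally show ?thesis by (simp add: C_def)
qed

lemma C_all: "k \<in> ker_eps \<Longrightarrow> C k"
proof (induction rule: K_induct)
  case Nil
  have "[S2] \<cdot> [] \<cdot> [S2] = []" by (simp add: mult_W3)
  then show ?case using a.one tc by (simp add: C_def)
next
  case (Step a b k)
  have Ca: "C xa" using ta s2_xa a.inv[of xa] by (simp add: C_def)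
  have Cb: "C xb" using tb s2_xb a.inv[of xb] by (simp add: C_def)
  have iK: "inv\<^bsub>W3\<^esub> xa \<in> ker_eps" "inv\<^bsub>W3\<^esub> xb \<in> ker_eps"
    using subgroup.m_inv_closed[OF subgroup_K] by auto
  have "C [a, b]" using pairs[OF Step(1)] Ca Cb C_inv C_mult iK
    by (auto intro!: C_mult C_inv)
  moreover have "[a, b] \<in> ker_eps" using Step(1) by (simp add: K_mem)
  ultimately show ?case using C_mult Step by blast
qed

lemma odd_K: "reduced u \<Longrightarrow> odd (length u) \<Longrightarrow> u \<cdot> [S2] \<in> ker_eps"
  by (simp add: K_mem even_m)
lemma even_K: "reduced u \<Longrightarrow> even (length u) \<Longrightarrow> u \<in> ker_eps"
  by (simp add: K_mem)

lemma t_odd: "odd (length t)"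
proof (rule odd_invol)
  show "reduced t" by simp
  show "foldr push t t = []" using tt' by (simp add: mult_W3)
  show "t \<noteq> []"
  proof
    assume t0: "t = []"
    then have "\<alpha> xa = inv\<^bsub>W3\<^esub> (\<alpha> xa)" using ta by simp
    then have e: "\<alpha> xa \<cdot> \<alpha> xa = []" using W.r_inv[of "\<alpha> xa"] by simp
    have "\<alpha> xa = []"
    proof (rule ccontr)
      assume "\<alpha> xa \<noteq> []"
      then have "odd (length (\<alpha> xa))" using odd_invol[of "\<alpha> xa"] e by (simp add: mult_W3)
      moreover have "even (length (\<alpha> xa))" using a.closed[OF xa_K] by (simp add: K_mem)
      ultimately show False by simp
    qed
    then have "\<alpha> xa = \<alpha> []" using a.one by simp
    then have "xa = []" using a.inj[of xa "[]"] by (simp add: K_mem xa_def)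
    then show False by (simp add: xa_def)
  qed
qed

definition ext where
  "ext w = (if reduced w then (if even (length w) then \<alpha> w else \<alpha> (w \<cdot> [S2]) \<cdot> t) else undefined)"

lemma ext_red: "reduced w \<Longrightarrow> reduced (ext w)"
  by (simp add: ext_def odd_K even_K)

lemma ext_even: "reduced w \<Longrightarrow> even (length (ext w)) \<longleftrightarrow> even (length w)"
  using t_odd a.closed odd_K even_K by (auto simp: ext_def even_m K_mem)

lemma CC: "k \<in> ker_eps \<Longrightarrow> \<alpha> ([S2] \<cdot> (k \<cdot> [S2])) = t \<cdot> (\<alpha> k \<cdot> t)"
  using C_all[of k] Kc[of k] by (simp add: C_def W.m_assoc)

lemma ext_mul: "reduced u \<Longrightarrow> reduced v \<Longrightarrow> ext (u \<cdot> v) = ext u \<cdot> ext v"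
proof -
  assume u: "reduced u" and v: "reduced v"
  show ?thesis
  proof (cases "even (length u)"; cases "even (length v)")
    assume eu: "even (length u)" and ev: "even (length v)"
    then show ?thesis using u v a.mul[OF even_K[OF u eu] even_K[OF v ev]] by (simp add: ext_def even_m)
  next
    assume eu: "even (length u)" and ov: "odd (length v)"
    have "u \<cdot> v \<cdot> [S2] = u \<cdot> (v \<cdot> [S2])" using u v by (simp add: W.m_assoc)
    then have "\<alpha> (u \<cdot> v \<cdot> [S2]) = \<alpha> u \<cdot> \<alpha> (v \<cdot> [S2])"
      using a.mul[OF even_K[OF u eu] odd_K[OF v ov]] by simp
    then show ?thesis using u v eu ov odd_K[OF v ov] even_K[OF u eu] by (simp add: ext_def even_m W.m_assoc)
  next
    assume ou: "odd (length u)" and ev: "even (length v)"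
    have vK: "v \<in> ker_eps" using even_K[OF v ev] .
    have "u \<cdot> v \<cdot> [S2] = (u \<cdot> [S2]) \<cdot> ([S2] \<cdot> (v \<cdot> [S2]))" using u v by (simp add: W.m_assoc)
    then have "\<alpha> (u \<cdot> v \<cdot> [S2]) = \<alpha> (u \<cdot> [S2]) \<cdot> (t \<cdot> (\<alpha> v \<cdot> t))"
      using a.mul[OF odd_K[OF u ou] conjK[OF vK, unfolded W.m_assoc[OF s2c Kc[OF vK] s2c]]] CC[OF vK]
      by simp
    then show ?thesis using u v ou ev odd_K[OF u ou] vK by (simp add: ext_def even_m W.m_assoc)
  next
    assume ou: "odd (length u)" and ov: "odd (length v)"
    have vK: "v \<cdot> [S2] \<in> ker_eps" using odd_K[OF v ov] .
    have "u \<cdot> v = (u \<cdot> [S2]) \<cdot> ([S2] \<cdot> ((v \<cdot> [S2]) \<cdot> [S2]))" using u v by (simp add: W.m_assoc)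
    then have "\<alpha> (u \<cdot> v) = \<alpha> (u \<cdot> [S2]) \<cdot> (t \<cdot> (\<alpha> (v \<cdot> [S2]) \<cdot> t))"
      using a.mul[OF odd_K[OF u ou] conjK[OF vK, unfolded W.m_assoc[OF s2c Kc[OF vK] s2c]]] CC[OF vK]
      by simp
    then show ?thesis using u v ou ov odd_K[OF u ou] vK by (simp add: ext_def even_m W.m_assoc)
  qed
qed

lemma ext_inj: "reduced u \<Longrightarrow> reduced v \<Longrightarrow> ext u = ext v \<Longrightarrow> u = v"
proof -
  assume u: "reduced u" and v: "reduced v" and e: "ext u = ext v"
  have p: "even (length u) \<longleftrightarrow> even (length v)" using ext_even[OF u] ext_even[OF v] e by simp
  show "u = v"
  proof (cases "even (length u)")
    case True
    then show ?thesis using p e u v a.inj even_K by (simp add: ext_def)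
  next
    case False
    then have "\<alpha> (u \<cdot> [S2]) \<cdot> t = \<alpha> (v \<cdot> [S2]) \<cdot> t" using p e u v by (simp add: ext_def)
    then have "\<alpha> (u \<cdot> [S2]) = \<alpha> (v \<cdot> [S2])" using u v False p odd_K by simp
    then have "u \<cdot> [S2] = v \<cdot> [S2]" using a.inj odd_K u v False p by blast
    then show ?thesis using u v by simp
  qed
qed

lemma ext_surj: "reduced w \<Longrightarrow> \<exists>u. reduced u \<and> ext u = w"
proof -
  assume w: "reduced w"
  show ?thesis
  proof (cases "even (length w)")
    case True
    then obtain l where l: "l \<in> ker_eps" "\<alpha> l = w" using a.surj even_K[OF w] by blast
    then show ?thesis by (intro exI[of _ l]) (auto simp: ext_def K_mem)
  next
    case False
    have "w \<cdot> t \<in> ker_eps" using w False t_odd by (simp add: K_mem even_m)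
    then obtain l where l: "l \<in> ker_eps" "\<alpha> l = w \<cdot> t" using a.surj by blast
    have lr: "reduced l" "even (length l)" using l(1) by (auto simp: K_mem)
    have "ext (l \<cdot> [S2]) = \<alpha> (l \<cdot> [S2] \<cdot> [S2]) \<cdot> t" using lr by (simp add: ext_def even_m)
    also have "l \<cdot> [S2] \<cdot> [S2] = l" using lr by (simp add: W.m_assoc)
    finally have "ext (l \<cdot> [S2]) = w" using l w by (simp add: W.m_assoc)
    then show ?thesis using lr by (intro exI[of _ "l \<cdot> [S2]"]) simp
  qed
qed

lemma ext_auto: "ext \<in> auto W3"
proof -
  have "ext \<in> hom W3 W3" by (rule homI) (auto simp: ext_red ext_mul)
  moreover have "bij_betw ext (carrier W3) (carrier W3)"
    unfolding bij_betw_def inj_on_def using ext_inj ext_surj ext_red by fastforce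
  moreover have "ext \<in> extensional (carrier W3)" by (simp add: ext_def extensional_def)
  ultimately show ?thesis by (simp add: auto_def Bij_def)
qed

lemma iota_ext: "iota ext = \<alpha>"
proof
  fix k show "iota ext k = \<alpha> k"
    using a.extK by (auto simp: iota_def ext_def K_mem extensional_def)
qed

end


fun code :: "gen \<Rightarrow> nat" where "code S1 = 0" | "code S2 = 1" | "code S3 = 2"

lemma code_lt: "code g < 3" by (cases g) auto
lemma code_inj: "code g = code h \<Longrightarrow> g = h" by (cases g; cases h) auto

definition num :: "gen list \<Rightarrow> nat" where "num w = foldl (\<lambda>n g. 3 * n + code g) 0 w"

lemma foldl_num: "foldl (\<lambda>n g. 3 * n + code g) k w = k * 3 ^ length w + num w"
proof (induction w arbitrary: k rule: rev_induct)
  case (snoc g w)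
  have ar: "3 * (k * 3 ^ n + x) + c = k * 3 ^ Suc n + (3 * x + c)" for n x c :: nat
    by (simp add: distrib_left mult.left_commute)
  have "foldl (\<lambda>n g. 3 * n + code g) k (w @ [g]) = 3 * (k * 3 ^ length w + num w) + code g"
    using snoc by simp
  also have "\<dots> = k * 3 ^ length (w @ [g]) + num (w @ [g])"
    unfolding ar by (simp add: num_def)
  finally show ?case .
qed (simp add: num_def)

lemma num_append: "num (x @ y) = num x * 3 ^ length y + num y"
  unfolding num_def foldl_append by (rule foldl_num[unfolded num_def])

lemma num_snoc: "num (x @ [g]) = 3 * num x + code g"
  by (simp add: num_def)

lemma num_lt: "num w < 3 ^ length w"
proof (induction w rule: rev_induct)
  case (snoc g w)
  then show ?case using code_lt[of g] by (simp add: num_snoc)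
qed (simp add: num_def)

lemma num_inj: "length x = length y \<Longrightarrow> num x = num y \<Longrightarrow> x = y"
proof (induction x arbitrary: y rule: rev_induct)
  case Nil then show ?case by simp
next
  case (snoc g x)
  then obtain y' h where y: "y = y' @ [h]" by (cases y rule: rev_exhaust) auto
  have "3 * num x + code g = 3 * num y' + code h" using snoc.prems y by (simp add: num_snoc)
  moreover have "(3 * num x + code g) mod 3 = code g" using code_lt[of g] by simp
  moreover have "(3 * num y' + code h) mod 3 = code h" using code_lt[of h] by simp
  ultimately have cg: "code g = code h" by simp
  have "num x = num y'" using \<open>3 * num x + code g = 3 * num y' + code h\<close> cg by simp
  then show ?case using snoc y code_inj cg by simp
qed

lemma num_cmp: "length p = length q \<Longrightarrow> num p < num q \<Longrightarrow> length X = length Y \<Longrightarrow> num (p @ X) < num (q @ Y)"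
proof -
  assume l: "length p = length q" "num p < num q" "length X = length Y"
  have "num (p @ X) < (num p + 1) * 3 ^ length X" using num_lt[of X] by (simp add: num_append)
  also have "\<dots> \<le> num q * 3 ^ length X" using l by (intro mult_le_mono1) simp
  also have "\<dots> \<le> num (q @ Y)" using l by (simp add: num_append)
  finally show ?thesis .
qed

definition ks :: "gen list \<Rightarrow> nat" where
  "ks w = num (take (length w div 2) w) + num (take (length w div 2) (rev w))"

lemma ks_rev: "ks (rev w) = ks w" by (simp add: ks_def)

lemma lcp_same_prefix:
  assumes "take n y = take n y'" "n \<le> length y" "n \<le> length y'" "lcp x y < n"
  shows "lcp x y' = lcp x y"
proof -
  let ?l = "lcp x y"
  have "take ?l x = take ?l y" by (rule lcp_take)
  also have "take ?l y = take ?l (take n y)" using assms(4) by (simp add: min_def)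
  also have "\<dots> = take ?l (take n y')" using assms(1) by simp
  also have "\<dots> = take ?l y'" using assms(4) by (simp add: min_def)
  finally have tk: "take ?l x = take ?l y'" .
  have ge: "?l \<le> lcp x y'"
  proof (rule lcp_ge)
    show "?l \<le> length x" by (rule lcp_le)
    show "?l \<le> length y'" using assms(3,4) by linarith
  qed (rule tk)
  show ?thesis
  proof (rule ccontr)
    assume "lcp x y' \<noteq> ?l"
    then have gt: "?l < lcp x y'" using ge by simp
    have "take (lcp x y') x = take (lcp x y') y'" by (rule lcp_take)
    moreover have "take (lcp x y') x ! ?l = x ! ?l" using gt by (rule nth_take)
    moreover have "take (lcp x y') y' ! ?l = y' ! ?l" using gt by (rule nth_take)
    ultimately have "x ! ?l = y' ! ?l" by simp
    moreover have "take n y ! ?l = y ! ?l" using assms(4) by (rule nth_take)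
    moreover have "take n y' ! ?l = y' ! ?l" using assms(4) by (rule nth_take)
    ultimately have "x ! ?l = y ! ?l" using assms(1) by simp
    moreover have "?l < length x" using gt lcp_le[of x y'] by simp
    moreover have "?l < length y" using assms(2,4) by simp
    ultimately show False using lcp_neq[of x y] by simp
  qed
qed

lemma take_rev_drop: "take m (rev a) = rev (drop (length a - m) a)"
  by (cases "m \<le> length a") (simp_all add: rev_drop)

lemma tie:
  assumes ra: "reduced a" and rb: "reduced b" and lb: "length b = 2 * m" and m: "m > 0"
    and l1: "lcp (rev a) b = m" and l2: "lcp (rev b) a = m" and la: "2 * m \<le> length a"
    and ea: "even (length a)"
  shows "(length (foldr push b a) = length a \<and> ks (foldr push b a) < ks a) \<or>
         (length (foldr push a b) = length a \<and> ks (foldr push a b) < ks a)"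
proof -
  define p where "p = take m b"
  define q where "q = drop m b"
  have b: "b = p @ q" by (simp add: p_def q_def)
  have lp: "length p = m" and lq: "length q = m" using lb by (simp_all add: p_def q_def)
  have "take m (rev b) = take m a" using lcp_take[of "rev b" a] l2 by simp
  then have ta: "take m a = rev q" using b lp lq by simp
  have "take m (rev a) = take m b" using lcp_take[of "rev a" b] l1 by simp
  then have "rev (drop (length a - m) a) = p" using take_rev_drop[of m a] by (simp add: p_def)
  then have da: "drop (length a - m) a = rev p" by (metis rev_rev_ident)
  define c where "c = drop m (take (length a - m) a)"
  have a: "a = rev q @ c @ rev p"
  proof -
    have "a = take (length a - m) a @ drop (length a - m) a" by (rule append_take_drop_id[symmetric])
    also have "take (length a - m) a = take m (take (length a - m) a) @ c"
      unfolding c_def by (rule append_take_drop_id[symmetric])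
    also have "take m (take (length a - m) a) = take m a"
    proof -
      have "m \<le> length a - m" using la by simp
      then show ?thesis by (simp add: min_def)
    qed
    finally have "a = (take m a @ c) @ drop (length a - m) a" .
    then show ?thesis unfolding ta da by simp
  qed
  have lc: "length a = 2 * m + length c" using a lp lq by simp
  then have "even (length c)" using ea by simp
  then obtain j where j: "length c = 2 * j" by (auto elim!: evenE)
  have h: "length a div 2 = m + j" using lc j by simp
  have ba: "foldr push b a = p @ c @ rev p"
    using cancel[OF rb ra] l2 lb a lp lq by (simp add: p_def)
  have ab: "foldr push a b = rev q @ c @ q"
    using cancel[OF ra rb] l1 lb a lp lq by (simp add: q_def)
  have "p \<noteq> rev q"
  proof
    assume pq: "p = rev q"
    have "b ! (m - 1) = q ! 0" using b pq lp lq m by (simp add: nth_append rev_nth)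
    moreover have "b ! Suc (m - 1) = q ! 0" using b lp m by (simp add: nth_append)
    moreover have "Suc (m - 1) < length b" using lb m by simp
    ultimately show False using rb reduced_nth[of b] by auto
  qed
  then have "num p \<noteq> num (rev q)" using num_inj lp lq by auto
  define C1 where "C1 = take j c"
  define C2 where "C2 = take j (rev c)"
  have ra: "rev a = p @ rev c @ q" using a by simp
  have jc: "j \<le> length c" "j \<le> length (rev c)" using j by simp_all
  have t1: "take (m + j) a = rev q @ C1"
    unfolding a C1_def using lq jc by simp
  have t2: "take (m + j) (rev a) = p @ C2"
    unfolding ra C2_def using lp jc by simp
  have ksa: "ks a = num (rev q @ C1) + num (p @ C2)"
    unfolding ks_def h t1 t2 ..
  have hba: "length (foldr push b a) div 2 = m + j" using ba lp lc j by simp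
  have hab: "length (foldr push a b) div 2 = m + j" using ab lq lc j by simp
  have t3: "take (m + j) (foldr push b a) = p @ C1"
    unfolding ba C1_def using lp jc by simp
  have t4: "take (m + j) (rev (foldr push b a)) = p @ C2"
    unfolding ba C2_def using lp jc by simp
  have t5: "take (m + j) (foldr push a b) = rev q @ C1"
    unfolding ab C1_def using lq jc by simp
  have t6: "take (m + j) (rev (foldr push a b)) = rev q @ C2"
    unfolding ab C2_def using lq jc by simp
  have ksba: "ks (foldr push b a) = num (p @ C1) + num (p @ C2)"
    unfolding ks_def hba t3 t4 ..
  have ksab: "ks (foldr push a b) = num (rev q @ C1) + num (rev q @ C2)"
    unfolding ks_def hab t5 t6 ..
  have lens: "length (foldr push b a) = length a" "length (foldr push a b) = length a"
    unfolding ba ab using lc lp lq by simp_all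
  show ?thesis
  proof (cases "num p < num (rev q)")
    case True
    then have "num (p @ C1) < num (rev q @ C1)" using lp lq by (intro num_cmp) auto
    then have "ks (foldr push b a) < ks a" unfolding ksa ksba by simp
    then show ?thesis using lens by simp
  next
    case False
    then have "num (rev q) < num p" using \<open>num p \<noteq> num (rev q)\<close> by simp
    then have "num (rev q @ C2) < num (p @ C2)" using lp lq by (intro num_cmp) auto
    then have "ks (foldr push a b) < ks a" unfolding ksa ksab by simp
    then show ?thesis using lens by simp
  qed
qed


fun prodl :: "gen list list \<Rightarrow> gen list" where
  "prodl [] = []"
| "prodl (a # L) = foldr push a (prodl L)"

fun noadj :: "gen list list \<Rightarrow> bool" where
  "noadj (a # b # L) = (b \<noteq> rev a \<and> noadj (b # L))"
| "noadj _ = True"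

lemma noadj_tl: "noadj (a # L) \<Longrightarrow> noadj L"
  by (cases L) auto

lemma prodl_red: "\<forall>a\<in>set L. reduced a \<Longrightarrow> reduced (prodl L)"
  by (induction L) (auto simp: reduced_foldr)

lemma prodl_append: "\<forall>a\<in>set L1. reduced a \<Longrightarrow> \<forall>a\<in>set L2. reduced a \<Longrightarrow>
    prodl (L1 @ L2) = foldr push (prodl L1) (prodl L2)"
  by (induction L1) (auto simp: mul_assoc_raw prodl_red)

lemma reduce_list:
  assumes "set L \<subseteq> S" "\<forall>a\<in>S. reduced a \<and> rev a \<in> S"
  shows "\<exists>L'. set L' \<subseteq> S \<and> noadj L' \<and> prodl L' = prodl L"
  using assms(1)
proof (induction L)
  case Nil then show ?case by (intro exI[of _ "[]"]) simp
next
  case (Cons a L0)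
  then obtain L0' where L0': "set L0' \<subseteq> S" "noadj L0'" "prodl L0' = prodl L0" by auto
  have ra: "reduced a" using Cons.prems assms(2) by auto
  show ?case
  proof (cases "L0' \<noteq> [] \<and> hd L0' = rev a")
    case True
    then obtain L1 where L1: "L0' = rev a # L1" by (cases L0') auto
    have rL1: "\<forall>x\<in>set L1. reduced x" using L0'(1) L1 assms(2) by auto
    have "prodl (a # L0) = foldr push a (foldr push (rev a) (prodl L1))"
      using L0'(3) L1 by simp
    also have "\<dots> = prodl L1"
      using mul_assoc_raw[of "prodl L1" a "rev a"] prodl_red[OF rL1] ra by (simp add: mul_rev2)
    finally show ?thesis using L0' L1 noadj_tl by (intro exI[of _ L1]) auto
  next
    case False
    have "noadj (a # L0')" using False L0'(2) by (cases L0') auto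
    then show ?thesis using L0' Cons.prems by (intro exI[of _ "a # L0'"]) auto
  qed
qed

lemma comm_mult:
  assumes "reduced x" "reduced y" "reduced w"
    "foldr push x w = foldr push w x" "foldr push y w = foldr push w y"
  shows "foldr push (foldr push x y) w = foldr push w (foldr push x y)"
proof -
  have "foldr push (foldr push x y) w = foldr push x (foldr push y w)" using assms(3) by (rule mul_assoc_raw)
  also have "\<dots> = foldr push x (foldr push w y)" by (simp only: assms(5))
  also have "\<dots> = foldr push (foldr push x w) y" using assms(2) by (rule mul_assoc_raw[symmetric])
  also have "\<dots> = foldr push (foldr push w x) y" by (simp only: assms(4))
  also have "\<dots> = foldr push w (foldr push x y)" using assms(2) by (rule mul_assoc_raw)
  finally show ?thesis .
qed

lemma commute_prods:
  assumes rz: "reduced z" and L: "set L \<subseteq> {[], z, rev z}" and M: "set M \<subseteq> {[], z, rev z}"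
  shows "foldr push (prodl L) (prodl M) = foldr push (prodl M) (prodl L)"
proof -
  have zz: "foldr push z (rev z) = []" "foldr push (rev z) z = []"
    using rz by (simp_all add: mul_rev mul_rev2)
  have rrz: "reduced (rev z)" using rz by (simp add: reduced_rev)
  define Cen where "Cen = {x. reduced x \<and> foldr push x z = foldr push z x \<and> foldr push x (rev z) = foldr push (rev z) x}"
  have zC: "z \<in> Cen" "rev z \<in> Cen" "[] \<in> Cen"
    using zz rz rrz by (auto simp: Cen_def mul_Nil_right mul_assoc_raw)
  have pC: "prodl L \<in> Cen" if "set L \<subseteq> {[], z, rev z}" for L
    using that
  proof (induction L)
    case Nil then show ?case using zC by simp
  next
    case (Cons a L)
    then have aC: "a \<in> Cen" and LC: "prodl L \<in> Cen" using zC by auto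
    show ?case using aC LC rz rrz comm_mult[of a "prodl L" z] comm_mult[of a "prodl L" "rev z"]
      unfolding Cen_def by (simp add: reduced_foldr)
  qed
  have "x \<in> Cen \<Longrightarrow> foldr push x (prodl M) = foldr push (prodl M) x" for x
    using M
  proof (induction M)
    case Nil then show ?case by (simp add: Cen_def mul_Nil_right)
  next
    case (Cons a M)
    have ra: "reduced a" using Cons.prems rz rrz by auto
    have rM: "reduced (prodl M)" using Cons.prems rz rrz by (intro prodl_red) auto
    have ax: "foldr push x a = foldr push a x" using Cons.prems zC unfolding Cen_def
      by (auto simp: mul_Nil_right)
    have rx: "reduced x" using Cons.prems by (simp add: Cen_def)
    have "foldr push x (prodl (a # M)) = foldr push (foldr push x a) (prodl M)"
      using rM by (simp add: mul_assoc_raw)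
    also have "\<dots> = foldr push a (foldr push x (prodl M))" using ax rM by (simp add: mul_assoc_raw)
    also have "\<dots> = foldr push a (foldr push (prodl M) x)" using Cons by simp
    also have "\<dots> = foldr push (prodl (a # M)) x" using rx by (simp add: mul_assoc_raw)
    finally show ?case .
  qed
  then show ?thesis using pC[OF L] by simp
qed

lemma xa_xb_noncomm: "foldr push [S1, S2] [S2, S3] \<noteq> foldr push [S2, S3] [S1, S2]"
  by simp

definition cnext :: "gen list list \<Rightarrow> nat" where
  "cnext L = (case L of a # b # _ \<Rightarrow> lcp (rev a) b | _ \<Rightarrow> 0)"

lemma PL:
  assumes S: "\<forall>a\<in>S. reduced a \<and> a \<noteq> []"
    and N2: "\<forall>a\<in>S. \<forall>b\<in>S. b \<noteq> rev a \<longrightarrow> 2 * lcp (rev a) b \<le> length a \<and> 2 * lcp (rev a) b \<le> length b"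
    and N3: "\<forall>a\<in>S. \<forall>b\<in>S. \<forall>c\<in>S. b \<noteq> rev a \<longrightarrow> c \<noteq> rev b \<longrightarrow> lcp (rev a) b + lcp (rev b) c < length b"
  shows "L \<noteq> [] \<Longrightarrow> set L \<subseteq> S \<Longrightarrow> noadj L \<Longrightarrow>
    reduced (prodl L) \<and> (\<forall>a\<in>set L. length a \<le> length (prodl L)) \<and>
    length (hd L) - cnext L \<le> length (prodl L) \<and>
    take (length (hd L) - cnext L) (prodl L) = take (length (hd L) - cnext L) (hd L)"
proof (induction L rule: induct_list012)
  case 1 then show ?case by simp
next
  case (2 a)
  then have "reduced a" using S by auto
  then show ?case by (simp add: mul_Nil_right cnext_def)
next
  case (3 a b L')
  let ?P = "prodl (b # L')"
  have IH: "reduced ?P \<and> (\<forall>x\<in>set (b # L'). length x \<le> length ?P) \<and>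
    length b - cnext (b # L') \<le> length ?P \<and>
    take (length b - cnext (b # L')) ?P = take (length b - cnext (b # L')) b"
    using "3.IH"(2) "3.prems" noadj_tl by auto
  have aS: "a \<in> S" and bS: "b \<in> S" using "3.prems" by auto
  have ba: "b \<noteq> rev a" using "3.prems" by simp
  have ra: "reduced a" and rb: "reduced b" and bne: "b \<noteq> []" using aS bS S by auto
  define c where "c = lcp (rev a) b"
  have c2: "2 * c \<le> length a" "2 * c \<le> length b" using N2 aS bS ba by (auto simp: c_def)
  have cn: "c < length b - cnext (b # L')"
  proof (cases L')
    case Nil
    have "length b > 0" using bne by simp
    then have "c < length b" using c2 by linarith
    then show ?thesis using Nil by (simp add: cnext_def)
  next
    case (Cons d L2)
    have "d \<in> S" "d \<noteq> rev b" using "3.prems" Cons by auto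
    then have "c + lcp (rev b) d < length b" using N3 aS bS ba by (auto simp: c_def)
    then show ?thesis using Cons by (simp add: cnext_def)
  qed
  have lc: "lcp (rev a) ?P = c"
    using lcp_same_prefix[of "length b - cnext (b # L')" b ?P "rev a"] IH cn
    by (simp add: c_def)
  have lP: "length b \<le> length ?P" using IH by simp
  have eq: "prodl (a # b # L') = take (length a - c) a @ drop c ?P"
    using cancel[OF ra] IH lc by simp
  have len: "length (prodl (a # b # L')) = length a - c + (length ?P - c)"
    unfolding eq using c2 by simp
  have r: "reduced (prodl (a # b # L'))" using IH by (simp add: reduced_foldr)
  have cnx: "cnext (a # b # L') = c" by (simp add: cnext_def c_def)
  show ?case
  proof (intro conjI)
    show "reduced (prodl (a # b # L'))" by (rule r)
    show "\<forall>x\<in>set (a # b # L'). length x \<le> length (prodl (a # b # L'))"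
      using IH len c2 lP by auto
    show "length (hd (a # b # L')) - cnext (a # b # L') \<le> length (prodl (a # b # L'))"
      using len cnx c2 lP by simp
    show "take (length (hd (a # b # L')) - cnext (a # b # L')) (prodl (a # b # L')) =
      take (length (hd (a # b # L')) - cnext (a # b # L')) (hd (a # b # L'))"
      unfolding eq cnx by simp
  qed
qed


lemma mW: "u \<cdot> v = foldr push u v" by (simp add: mult_W3)
lemma iW: "reduced x \<Longrightarrow> inv\<^bsub>W3\<^esub> x = rev x" by (simp add: inv_W3)

lemma canc1[simp]: "reduced V \<Longrightarrow> reduced x \<Longrightarrow> V \<cdot> (inv\<^bsub>W3\<^esub> V \<cdot> x) = x"
  by (simp add: W.m_assoc[symmetric])
lemma canc2[simp]: "reduced V \<Longrightarrow> reduced x \<Longrightarrow> inv\<^bsub>W3\<^esub> V \<cdot> (V \<cdot> x) = x"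
  by (simp add: W.m_assoc[symmetric])
lemma canc3[simp]: "reduced V \<Longrightarrow> V \<cdot> inv\<^bsub>W3\<^esub> V = []" and canc4[simp]: "reduced V \<Longrightarrow> inv\<^bsub>W3\<^esub> V \<cdot> V = []"
  using W.r_inv[of V] W.l_inv[of V] by simp_all

definition inverts where "inverts t x \<longleftrightarrow> t \<cdot> x \<cdot> t = inv\<^bsub>W3\<^esub> x"

definition P where "P y z \<longleftrightarrow> (\<exists>t. reduced t \<and> t \<cdot> t = [] \<and> inverts t y \<and> inverts t z)"

lemma swap_t:
  assumes "reduced t" "reduced V" "t \<cdot> t = []" "inverts t V"
  shows "t \<cdot> V = inv\<^bsub>W3\<^esub> V \<cdot> t"
proof -
  have "t \<cdot> V = t \<cdot> V \<cdot> (t \<cdot> t)" using assms by simp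
  also have "\<dots> = (t \<cdot> V \<cdot> t) \<cdot> t" using assms by (simp add: W.m_assoc)
  finally show ?thesis using assms by (simp add: inverts_def)
qed

lemma swap_t2:
  assumes "reduced t" "reduced V" "t \<cdot> t = []" "inverts t V" "reduced x"
  shows "t \<cdot> (V \<cdot> x) = inv\<^bsub>W3\<^esub> V \<cdot> (t \<cdot> x)"
  using swap_t[OF assms(1-4)] assms by (simp add: W.m_assoc[symmetric])

lemma tt_x: "reduced t \<Longrightarrow> t \<cdot> t = [] \<Longrightarrow> reduced x \<Longrightarrow> t \<cdot> (t \<cdot> x) = x"
  by (simp add: W.m_assoc[symmetric])

lemma inv_t': "reduced t \<Longrightarrow> t \<cdot> t = [] \<Longrightarrow> inv\<^bsub>W3\<^esub> t = t"
  using W.inv_equality[of t t] by simp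

lemma inverts_inv:
  assumes "reduced t" "t \<cdot> t = []" "reduced x" "inverts t x"
  shows "inverts t (inv\<^bsub>W3\<^esub> x)"
proof -
  have "inv\<^bsub>W3\<^esub> (t \<cdot> x \<cdot> t) = inv\<^bsub>W3\<^esub> t \<cdot> inv\<^bsub>W3\<^esub> x \<cdot> inv\<^bsub>W3\<^esub> t"
    using assms by (simp add: W.inv_mult_group W.m_assoc)
  then show ?thesis using assms inv_t'[OF assms(1,2)] by (simp add: inverts_def)
qed

lemma move_left:
  assumes r: "reduced t" "reduced U" "reduced V" and tt: "t \<cdot> t = []"
    and iU: "inverts t U" and iV: "inverts t V"
  shows "(V \<cdot> t) \<cdot> (V \<cdot> t) = [] \<and> inverts (V \<cdot> t) (V \<cdot> U) \<and> inverts (V \<cdot> t) V"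
proof -
  note sU = swap_t2[OF r(1) r(2) tt iU] and sV = swap_t2[OF r(1) r(3) tt iV]
  have a: "(V \<cdot> t) \<cdot> (V \<cdot> t) = []" using r tt sV by (simp add: W.m_assoc)
  have b: "(V \<cdot> t) \<cdot> (V \<cdot> U) \<cdot> (V \<cdot> t) = inv\<^bsub>W3\<^esub> (V \<cdot> U)"
    using r tt sV sU by (simp add: W.m_assoc W.inv_mult_group tt_x)
  have c: "(V \<cdot> t) \<cdot> V \<cdot> (V \<cdot> t) = inv\<^bsub>W3\<^esub> V"
    using r tt sV by (simp add: W.m_assoc tt_x)
  show ?thesis using a b c by (simp add: inverts_def)
qed

lemma move_right:
  assumes r: "reduced t" "reduced U" "reduced V" and tt: "t \<cdot> t = []"
    and iU: "inverts t U" and iV: "inverts t V"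
  shows "(t \<cdot> V) \<cdot> (t \<cdot> V) = [] \<and> inverts (t \<cdot> V) (U \<cdot> V) \<and> inverts (t \<cdot> V) V"
proof -
  note sU = swap_t2[OF r(1) r(2) tt iU] and sV = swap_t2[OF r(1) r(3) tt iV]
  have a: "(t \<cdot> V) \<cdot> (t \<cdot> V) = []" using r tt sV by (simp add: W.m_assoc tt_x)
  have b: "(t \<cdot> V) \<cdot> (U \<cdot> V) \<cdot> (t \<cdot> V) = inv\<^bsub>W3\<^esub> (U \<cdot> V)"
    using r tt sV sU by (simp add: W.m_assoc W.inv_mult_group tt_x)
  have c: "(t \<cdot> V) \<cdot> V \<cdot> (t \<cdot> V) = inv\<^bsub>W3\<^esub> V"
    using r tt sV by (simp add: W.m_assoc tt_x)
  show ?thesis using a b c by (simp add: inverts_def)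
qed

lemma P_left:
  assumes "reduced U" "reduced V" "P (V \<cdot> U) V"
  shows "P U V"
proof -
  obtain t where t: "reduced t" "t \<cdot> t = []" "inverts t (V \<cdot> U)" "inverts t V"
    using assms(3) by (auto simp: P_def)
  have iV: "inverts t (inv\<^bsub>W3\<^esub> V)" using inverts_inv t assms by simp
  have m: "(inv\<^bsub>W3\<^esub> V \<cdot> t) \<cdot> (inv\<^bsub>W3\<^esub> V \<cdot> t) = [] \<and>
      inverts (inv\<^bsub>W3\<^esub> V \<cdot> t) (inv\<^bsub>W3\<^esub> V \<cdot> (V \<cdot> U)) \<and> inverts (inv\<^bsub>W3\<^esub> V \<cdot> t) (inv\<^bsub>W3\<^esub> V)"
    using move_left[of t "V \<cdot> U" "inv\<^bsub>W3\<^esub> V"] t iV assms by simp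
  have "inverts (inv\<^bsub>W3\<^esub> V \<cdot> t) V"
    using inverts_inv[of "inv\<^bsub>W3\<^esub> V \<cdot> t" "inv\<^bsub>W3\<^esub> V"] m t assms by simp
  then show ?thesis using m t assms unfolding P_def
    by (intro exI[of _ "inv\<^bsub>W3\<^esub> V \<cdot> t"]) simp
qed

lemma P_right:
  assumes "reduced U" "reduced V" "P (U \<cdot> V) V"
  shows "P U V"
proof -
  obtain t where t: "reduced t" "t \<cdot> t = []" "inverts t (U \<cdot> V)" "inverts t V"
    using assms(3) by (auto simp: P_def)
  have iV: "inverts t (inv\<^bsub>W3\<^esub> V)" using inverts_inv t assms by simp
  have e: "U \<cdot> V \<cdot> inv\<^bsub>W3\<^esub> V = U" using assms by (simp add: W.m_assoc)
  have m: "(t \<cdot> inv\<^bsub>W3\<^esub> V) \<cdot> (t \<cdot> inv\<^bsub>W3\<^esub> V) = [] \<and>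
      inverts (t \<cdot> inv\<^bsub>W3\<^esub> V) (U \<cdot> V \<cdot> inv\<^bsub>W3\<^esub> V) \<and> inverts (t \<cdot> inv\<^bsub>W3\<^esub> V) (inv\<^bsub>W3\<^esub> V)"
    using move_right[of t "U \<cdot> V" "inv\<^bsub>W3\<^esub> V"] t iV assms by simp
  have "inverts (t \<cdot> inv\<^bsub>W3\<^esub> V) V"
    using inverts_inv[of "t \<cdot> inv\<^bsub>W3\<^esub> V" "inv\<^bsub>W3\<^esub> V"] m t assms by simp
  then show ?thesis using m t assms e unfolding P_def
    by (intro exI[of _ "t \<cdot> inv\<^bsub>W3\<^esub> V"]) simp
qed

lemma P_sym: "P y z = P z y" by (auto simp: P_def)

lemma P_inv1: "reduced y \<Longrightarrow> P (inv\<^bsub>W3\<^esub> y) z = P y z"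
  unfolding P_def using inverts_inv W.inv_inv[of y] by (metis carrier_W3 mem_Collect_eq red_inv)


definition Sset where "Sset y z = {y, inv\<^bsub>W3\<^esub> y, z, inv\<^bsub>W3\<^esub> z}"
definition prods where "prods S = {prodl L | L. set L \<subseteq> S}"
definition G where "G y z \<longleftrightarrow> ker_eps \<subseteq> prods (Sset y z)"

lemma prodl_m: "prodl (a # L) = a \<cdot> prodl L" by (simp add: mW)

lemma prods_single: "x \<in> T \<Longrightarrow> reduced x \<Longrightarrow> x \<in> prods T"
  unfolding prods_def by (rule CollectI, rule exI[of _ "[x]"]) (simp add: mul_Nil_right)

lemma prods_mult:
  assumes "\<forall>x\<in>T. reduced x" "x \<in> prods T" "w \<in> prods T"
  shows "x \<cdot> w \<in> prods T"
proof -
  obtain L M where "set L \<subseteq> T" "x = prodl L" "set M \<subseteq> T" "w = prodl M"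
    using assms(2,3) by (auto simp: prods_def)
  moreover have "\<forall>a\<in>set L. reduced a" "\<forall>a\<in>set M. reduced a" using calculation assms(1) by auto
  ultimately have "x \<cdot> w = prodl (L @ M)" "set (L @ M) \<subseteq> T" using prodl_append[of L M] by (auto simp: mW)
  then show ?thesis unfolding prods_def by blast
qed

lemma prods_sub:
  assumes "\<forall>x\<in>T. reduced x" "S \<subseteq> prods T"
  shows "prods S \<subseteq> prods T"
proof
  fix x assume "x \<in> prods S"
  then obtain L where L: "set L \<subseteq> S" "x = prodl L" by (auto simp: prods_def)
  have "prodl L \<in> prods T" using L(1)
  proof (induction L)
    case Nil then show ?case by (auto simp: prods_def intro: exI[of _ "[]"])
  next
    case (Cons a L)
    have "a \<cdot> prodl L \<in> prods T" using Cons prods_mult[OF assms(1)] assms(2) by auto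
    then show ?case by (simp only: prodl_m)
  qed
  then show "x \<in> prods T" using L by simp
qed

lemma Sset_red: "reduced y \<Longrightarrow> reduced z \<Longrightarrow> \<forall>x\<in>Sset y z. reduced x"
  by (simp add: Sset_def)

lemma G_gen:
  assumes r: "\<forall>x\<in>T. reduced x" and ab: "reduced a" "reduced b"
    and bT: "b \<in> T" "inv\<^bsub>W3\<^esub> b \<in> T"
    and aP: "a \<in> prods T" "inv\<^bsub>W3\<^esub> a \<in> prods T" and G: "G a b"
  shows "ker_eps \<subseteq> prods T"
proof -
  have "b \<in> prods T" using prods_single[OF bT(1) ab(2)] .
  moreover have "inv\<^bsub>W3\<^esub> b \<in> prods T" using prods_single[OF bT(2)] ab(2) red_inv by blast
  ultimately have "Sset a b \<subseteq> prods T" using aP unfolding Sset_def by blast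
  then have "prods (Sset a b) \<subseteq> prods T" by (rule prods_sub[OF r])
  then show ?thesis using G unfolding G_def by (rule order_trans[rotated])
qed

lemma G_left:
  assumes "reduced a" "reduced b" "G a b"
  shows "G (b \<cdot> a) b"
proof -
  let ?T = "Sset (b \<cdot> a) b"
  have r: "\<forall>x\<in>?T. reduced x" using assms by (intro Sset_red red_m)
  have T: "b \<in> ?T" "inv\<^bsub>W3\<^esub> b \<in> ?T" "b \<cdot> a \<in> ?T" "inv\<^bsub>W3\<^esub> (b \<cdot> a) \<in> ?T"
    by (auto simp: Sset_def)
  have e1: "a = inv\<^bsub>W3\<^esub> b \<cdot> (b \<cdot> a)" using assms by simp
  have e2: "inv\<^bsub>W3\<^esub> a = inv\<^bsub>W3\<^esub> (b \<cdot> a) \<cdot> b"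
    using assms by (simp add: W.inv_mult_group W.m_assoc)
  have "inv\<^bsub>W3\<^esub> b \<cdot> (b \<cdot> a) \<in> prods ?T"
    using assms T by (intro prods_mult[OF r] prods_single) auto
  then have p1: "a \<in> prods ?T" by (simp only: e1[symmetric])
  have "inv\<^bsub>W3\<^esub> (b \<cdot> a) \<cdot> b \<in> prods ?T"
    using assms T by (intro prods_mult[OF r] prods_single) auto
  then have p2: "inv\<^bsub>W3\<^esub> a \<in> prods ?T" by (simp only: e2[symmetric])
  show ?thesis unfolding G_def by (rule G_gen[OF r assms(1,2) T(1,2) p1 p2 assms(3)])
qed

lemma G_right:
  assumes "reduced a" "reduced b" "G a b"
  shows "G (a \<cdot> b) b"
proof -
  let ?T = "Sset (a \<cdot> b) b"
  have r: "\<forall>x\<in>?T. reduced x" using assms by (intro Sset_red red_m)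
  have T: "b \<in> ?T" "inv\<^bsub>W3\<^esub> b \<in> ?T" "a \<cdot> b \<in> ?T" "inv\<^bsub>W3\<^esub> (a \<cdot> b) \<in> ?T"
    by (auto simp: Sset_def)
  have e1: "a = (a \<cdot> b) \<cdot> inv\<^bsub>W3\<^esub> b" using assms by (simp add: W.m_assoc)
  have e2: "inv\<^bsub>W3\<^esub> a = b \<cdot> inv\<^bsub>W3\<^esub> (a \<cdot> b)"
    using assms by (simp add: W.inv_mult_group W.m_assoc)
  have "(a \<cdot> b) \<cdot> inv\<^bsub>W3\<^esub> b \<in> prods ?T"
    using assms T by (intro prods_mult[OF r] prods_single) auto
  then have p1: "a \<in> prods ?T" by (simp only: e1[symmetric])
  have "b \<cdot> inv\<^bsub>W3\<^esub> (a \<cdot> b) \<in> prods ?T"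
    using assms T by (intro prods_mult[OF r] prods_single) auto
  then have p2: "inv\<^bsub>W3\<^esub> a \<in> prods ?T" by (simp only: e2[symmetric])
  show ?thesis unfolding G_def by (rule G_gen[OF r assms(1,2) T(1,2) p1 p2 assms(3)])
qed

lemma no_cyclic:
  assumes rz: "reduced z" and T: "T \<subseteq> {[], z, rev z}"
  shows "\<not> ([S1, S2] \<in> prods T \<and> [S2, S3] \<in> prods T)"
proof
  assume "[S1, S2] \<in> prods T \<and> [S2, S3] \<in> prods T"
  then obtain L M where "set L \<subseteq> T" "prodl L = [S1, S2]" "set M \<subseteq> T" "prodl M = [S2, S3]"
    by (auto simp: prods_def)
  then show False using commute_prods[OF rz, of L M] T xa_xb_noncomm by auto
qed

lemma K_props: "k \<in> ker_eps \<Longrightarrow> reduced k \<and> even (length k)" by (simp add: K_mem)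

lemma invK: "k \<in> ker_eps \<Longrightarrow> inv\<^bsub>W3\<^esub> k \<in> ker_eps"
  using subgroup.m_inv_closed[OF subgroup_K] by blast
lemma mK: "k \<in> ker_eps \<Longrightarrow> l \<in> ker_eps \<Longrightarrow> k \<cdot> l \<in> ker_eps"
  using subgroup.m_closed[OF subgroup_K] by blast

lemma len_inv: "reduced x \<Longrightarrow> length (inv\<^bsub>W3\<^esub> x) = length x" by (simp add: iW)
lemma ks_inv: "reduced x \<Longrightarrow> ks (inv\<^bsub>W3\<^esub> x) = ks x" by (simp add: iW ks_rev)

lemma pair_cases:
  assumes "reduced y" "reduced z" "a \<in> Sset y z" "b \<in> Sset y z" "a \<noteq> b" "a \<noteq> inv\<^bsub>W3\<^esub> b"
  shows "(a \<in> {y, inv\<^bsub>W3\<^esub> y} \<and> b \<in> {z, inv\<^bsub>W3\<^esub> z}) \<or> (a \<in> {z, inv\<^bsub>W3\<^esub> z} \<and> b \<in> {y, inv\<^bsub>W3\<^esub> y})"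
  using assms W.inv_inv[of y] W.inv_inv[of z] by (auto simp: Sset_def)

lemma Sset_swap: "Sset y z = Sset z y" by (auto simp: Sset_def)

lemma Sset_pair:
  assumes "reduced y" "reduced z" "a \<in> {y, inv\<^bsub>W3\<^esub> y}" "b \<in> {z, inv\<^bsub>W3\<^esub> z}"
  shows "Sset a b = Sset y z"
  using assms W.inv_inv[of y] W.inv_inv[of z] by (auto simp: Sset_def)

lemma P_pair:
  assumes "reduced y" "reduced z" "a \<in> {y, inv\<^bsub>W3\<^esub> y}" "b \<in> {z, inv\<^bsub>W3\<^esub> z}"
  shows "P a b = P y z"
proof -
  have "P a z = P y z" using assms P_inv1 by auto
  moreover have "P a b = P a z" using assms P_inv1[of z a] P_sym by auto
  ultimately show ?thesis by simp
qed

lemma mu_pair: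
  assumes "reduced y" "reduced z" "a \<in> {y, inv\<^bsub>W3\<^esub> y}" "b \<in> {z, inv\<^bsub>W3\<^esub> z}"
  shows "length a = length y \<and> ks a = ks y \<and> length b = length z \<and> ks b = ks z"
  using assms len_inv ks_inv by auto

lemma letters_common: "a1 \<noteq> a2 \<Longrightarrow> c1 \<noteq> c2 \<Longrightarrow> \<exists>e::gen. (e = a1 \<or> e = a2) \<and> (e = c1 \<or> e = c2)"
  by (cases a1; cases a2; cases c1; cases c2) auto

lemma inverts_letter: "a \<noteq> b \<Longrightarrow> (e = a \<or> e = b) \<Longrightarrow> inverts [e] [a, b]"
  by (cases a; cases b; cases e) (auto simp: inverts_def mW iW)

lemma P_len2:
  assumes "reduced y" "length y = 2" "reduced z" "length z = 2"
  shows "P y z"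
proof -
  obtain a1 a2 where y: "y = [a1, a2]" using assms(2)
    by (cases y; cases "tl y") auto
  obtain c1 c2 where z: "z = [c1, c2]" using assms(4)
    by (cases z; cases "tl z") auto
  have "a1 \<noteq> a2" "c1 \<noteq> c2" using assms y z by auto
  then obtain e where e: "e = a1 \<or> e = a2" "e = c1 \<or> e = c2" using letters_common by blast
  have "[e] \<cdot> [e] = []" by (simp add: mW)
  then show ?thesis unfolding P_def y z using inverts_letter e \<open>a1 \<noteq> a2\<close> \<open>c1 \<noteq> c2\<close>
    by (intro exI[of _ "[e]"]) auto
qed


lemma same_other:
  assumes "a \<in> {y, rev y, z, rev z}" "b \<in> {y, rev y, z, rev z}" "c \<in> {y, rev y, z, rev z}"
    "a \<noteq> b" "a \<noteq> rev b" "c \<noteq> b" "c \<noteq> rev b" "a \<noteq> rev c"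
  shows "a = c"
  using assms by auto

lemma even_pos:
  assumes "even (length a)" "a \<noteq> []"
  obtains m where "length a = 2 * m" "m > 0"
proof -
  obtain m where "length a = 2 * m" using assms(1) by (auto elim!: evenE)
  moreover have "m > 0" using calculation assms(2) by (cases m) auto
  ultimately show ?thesis using that by blast
qed

lemma nielsen_aux:
  "\<forall>y z. (length y + length z, ks y + ks z) = p \<longrightarrow> y \<in> ker_eps \<longrightarrow> z \<in> ker_eps \<longrightarrow> G y z \<longrightarrow> P y z"
proof (induction p rule: wf_induct[OF wf_lex_prod[OF wf_less_than wf_less_than]])
  case (1 p)
  show ?case
  proof (intro allI impI)
    fix y z
    assume p: "(length y + length z, ks y + ks z) = p" and yK: "y \<in> ker_eps" and zK: "z \<in> ker_eps"
      and Gyz: "G y z"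
    have IH: "\<And>y' z'. ((length y' + length z', ks y' + ks z'), p) \<in> less_than <*lex*> less_than \<Longrightarrow>
        y' \<in> ker_eps \<Longrightarrow> z' \<in> ker_eps \<Longrightarrow> G y' z' \<Longrightarrow> P y' z'"
      using 1 by blast
    have ry: "reduced y" "even (length y)" and rz: "reduced z" "even (length z)"
      using yK zK by (simp_all add: K_mem)
    define S where "S = Sset y z"
    have S_eq: "S = {y, rev y, z, rev z}" using ry rz by (simp add: S_def Sset_def iW)
    have SK: "\<forall>a\<in>S. a \<in> ker_eps" using yK zK ry rz by (auto simp: S_eq K_mem reduced_rev)
    have Sred: "\<forall>a\<in>S. reduced a" and Sev: "\<forall>a\<in>S. even (length a)" using SK by (auto simp: K_mem)
    have Srev: "\<forall>a\<in>S. rev a \<in> S" by (auto simp: S_eq)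
    have xK: "[S1, S2] \<in> ker_eps" "[S2, S3] \<in> ker_eps" by (simp_all add: K_mem)
    have xS: "[S1, S2] \<in> prods S" "[S2, S3] \<in> prods S" using Gyz xK by (auto simp: G_def S_def)
    have yne: "y \<noteq> []"
    proof
      assume "y = []"
      then have "S \<subseteq> {[], z, rev z}" by (auto simp: S_eq)
      then show False using no_cyclic[OF rz(1)] xS by blast
    qed
    have zne: "z \<noteq> []"
    proof
      assume "z = []"
      then have "S \<subseteq> {[], y, rev y}" by (auto simp: S_eq)
      then show False using no_cyclic[OF ry(1)] xS by blast
    qed
    have Sne: "\<forall>a\<in>S. a \<noteq> []" using yne zne by (auto simp: S_eq)
    have Sinv: "a \<in> S \<Longrightarrow> inv\<^bsub>W3\<^esub> a = rev a" for a using Sred iW by blast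
    have transfer: "Sset a b = S \<and> length a + length b = length y + length z \<and>
        ks a + ks b = ks y + ks z \<and> (P a b \<longrightarrow> P y z)"
      if ab: "a \<in> S" "b \<in> S" "a \<noteq> b" "a \<noteq> inv\<^bsub>W3\<^esub> b" for a b
    proof -
      have "(a \<in> {y, inv\<^bsub>W3\<^esub> y} \<and> b \<in> {z, inv\<^bsub>W3\<^esub> z}) \<or> (a \<in> {z, inv\<^bsub>W3\<^esub> z} \<and> b \<in> {y, inv\<^bsub>W3\<^esub> y})"
        using pair_cases[OF ry(1) rz(1) _ _ ab(3) ab(4)] ab(1,2) unfolding S_def by blast
      then show ?thesis
      proof
        assume c: "a \<in> {y, inv\<^bsub>W3\<^esub> y} \<and> b \<in> {z, inv\<^bsub>W3\<^esub> z}"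
        have e1: "Sset a b = Sset y z" using c by (intro Sset_pair[OF ry(1) rz(1)]) auto
        have e2: "P a b = P y z" using c by (intro P_pair[OF ry(1) rz(1)]) auto
        have e3: "length a = length y \<and> ks a = ks y \<and> length b = length z \<and> ks b = ks z"
          using c by (intro mu_pair[OF ry(1) rz(1)]) auto
        show ?thesis unfolding S_def using e1 e2 e3 by simp
      next
        assume c: "a \<in> {z, inv\<^bsub>W3\<^esub> z} \<and> b \<in> {y, inv\<^bsub>W3\<^esub> y}"
        have e1: "Sset a b = Sset z y" using c by (intro Sset_pair[OF rz(1) ry(1)]) auto
        have e2: "P a b = P z y" using c by (intro P_pair[OF rz(1) ry(1)]) auto
        have e3: "length a = length z \<and> ks a = ks z \<and> length b = length y \<and> ks b = ks y"
          using c by (intro mu_pair[OF rz(1) ry(1)]) auto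
        have e4: "Sset z y = Sset y z" by (rule Sset_swap)
        have e5: "P z y = P y z" by (rule P_sym)
        show ?thesis unfolding S_def using e1 e2 e3 e4 e5 by simp
      qed
    qed
    have moveL: "P y z" if ab: "a \<in> S" "b \<in> S" "a \<noteq> b" "a \<noteq> inv\<^bsub>W3\<^esub> b"
      and dec: "length (b \<cdot> a) < length a \<or> (length (b \<cdot> a) = length a \<and> ks (b \<cdot> a) < ks a)" for a b
    proof -
      note tr = transfer[OF ab]
      have ra: "reduced a" and rb: "reduced b" using ab Sred by auto
      have Gab: "G a b" using Gyz tr by (simp add: G_def S_def)
      have "P (b \<cdot> a) b"
      proof (rule IH)
        show "b \<cdot> a \<in> ker_eps" using ab SK mK by blast
        show "b \<in> ker_eps" using ab SK by blast
        show "G (b \<cdot> a) b" by (rule G_left[OF ra rb Gab])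
        show "((length (b \<cdot> a) + length b, ks (b \<cdot> a) + ks b), p) \<in> less_than <*lex*> less_than"
          using dec tr p[symmetric] by auto
      qed
      then have "P a b" by (rule P_left[OF ra rb])
      then show ?thesis using tr by blast
    qed
    have moveR: "P y z" if ab: "a \<in> S" "b \<in> S" "a \<noteq> b" "a \<noteq> inv\<^bsub>W3\<^esub> b"
      and dec: "length (a \<cdot> b) < length a \<or> (length (a \<cdot> b) = length a \<and> ks (a \<cdot> b) < ks a)" for a b
    proof -
      note tr = transfer[OF ab]
      have ra: "reduced a" and rb: "reduced b" using ab Sred by auto
      have Gab: "G a b" using Gyz tr by (simp add: G_def S_def)
      have "P (a \<cdot> b) b"
      proof (rule IH)
        show "a \<cdot> b \<in> ker_eps" using ab SK mK by blast
        show "b \<in> ker_eps" using ab SK by blast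
        show "G (a \<cdot> b) b" by (rule G_right[OF ra rb Gab])
        show "((length (a \<cdot> b) + length b, ks (a \<cdot> b) + ks b), p) \<in> less_than <*lex*> less_than"
          using dec tr p[symmetric] by auto
      qed
      then have "P a b" by (rule P_right[OF ra rb])
      then show ?thesis using tr by blast
    qed
    show "P y z"
    proof (rule ccontr)
      assume nP: "\<not> P y z"
      have nm: "length a \<le> length (foldr push b a) \<and> (length (foldr push b a) = length a \<longrightarrow> ks a \<le> ks (foldr push b a)) \<and>
          length a \<le> length (foldr push a b) \<and> (length (foldr push a b) = length a \<longrightarrow> ks a \<le> ks (foldr push a b))"
        if ab: "a \<in> S" "b \<in> S" "a \<noteq> b" "a \<noteq> rev b" for a b
      proof -
        have ab': "a \<noteq> inv\<^bsub>W3\<^esub> b" using ab Sinv by simp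
        have "\<not> (length (b \<cdot> a) < length a \<or> (length (b \<cdot> a) = length a \<and> ks (b \<cdot> a) < ks a))"
          using moveL[OF ab(1,2,3) ab'] nP by blast
        moreover have "\<not> (length (a \<cdot> b) < length a \<or> (length (a \<cdot> b) = length a \<and> ks (a \<cdot> b) < ks a))"
          using moveR[OF ab(1,2,3) ab'] nP by blast
        ultimately show ?thesis by (auto simp: mW)
      qed
      have lenc: "length (foldr push a b) + 2 * lcp (rev a) b = length a + length b"
        if "a \<in> S" "b \<in> S" for a b using that Sred length_cancel by blast
      have N2: "\<forall>a\<in>S. \<forall>b\<in>S. b \<noteq> rev a \<longrightarrow> 2 * lcp (rev a) b \<le> length a \<and> 2 * lcp (rev a) b \<le> length b"
      proof (intro ballI impI)
        fix a b assume a: "a \<in> S" and b: "b \<in> S" and ba: "b \<noteq> rev a"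
        show "2 * lcp (rev a) b \<le> length a \<and> 2 * lcp (rev a) b \<le> length b"
        proof (cases "a = b")
          case True
          obtain m where m: "length a = 2 * m" "m > 0" using Sev Sne a even_pos by blast
          have "lcp (rev a) a < m" using palin[OF _ m] Sred a by blast
          then show ?thesis using True m by simp
        next
          case False
          have ab: "a \<noteq> rev b" using ba by auto
          have "length a \<le> length (foldr push a b)" using nm[OF a b False ab] by simp
          moreover have "length b \<le> length (foldr push a b)" using nm[of b a] a b False ba by auto
          ultimately show ?thesis using lenc[OF a b] by simp
        qed
      qed
      have N3: "\<forall>a\<in>S. \<forall>b\<in>S. \<forall>c\<in>S. b \<noteq> rev a \<longrightarrow> c \<noteq> rev b \<longrightarrow> lcp (rev a) b + lcp (rev b) c < length b"
      proof (intro ballI impI)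
        fix a b c assume a: "a \<in> S" and b: "b \<in> S" and c: "c \<in> S" and ba: "b \<noteq> rev a" and cb: "c \<noteq> rev b"
        show "lcp (rev a) b + lcp (rev b) c < length b"
        proof (rule ccontr)
          assume ge: "\<not> ?thesis"
          obtain m where m: "length b = 2 * m" "m > 0" using Sev Sne b even_pos by blast
          have rb: "reduced b" and ra: "reduced a" using a b Sred by auto
          have n1: "2 * lcp (rev a) b \<le> length a" "2 * lcp (rev a) b \<le> length b" using N2 a b ba by auto
          have n2: "2 * lcp (rev b) c \<le> length b" using N2 b c cb by auto
          have l1: "lcp (rev a) b = m" and l2: "lcp (rev b) c = m" using ge n1 n2 m by linarith+
          have pb: "lcp (rev b) b < m" by (rule palin[OF rb m])
          have ab: "a \<noteq> b" using l1 pb by auto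
          have cb': "c \<noteq> b" using l2 pb by auto
          have ac: "a \<noteq> rev c"
          proof
            assume "a = rev c"
            then have "rev a = c" by simp
            then have l1': "lcp c b = m" using l1 by simp
            have "take m c = take m b" using lcp_take[of c b] l1' by simp
            moreover have "take m (rev b) = take m c" using lcp_take[of "rev b" c] l2 by simp
            ultimately have "take m (rev b) = take m b" by simp
            then have "m \<le> lcp (rev b) b" using m by (intro lcp_ge) auto
            then show False using pb by simp
          qed
          have abr: "a \<noteq> rev b" using ba by auto
          have "a = c" using same_other[of a y z b c] a b c ab abr cb' cb ac by (simp add: S_eq)
          then have l2': "lcp (rev b) a = m" using l2 by simp
          have "even (length a)" using Sev a by blast
          then have "(length (foldr push b a) = length a \<and> ks (foldr push b a) < ks a) \<or>
              (length (foldr push a b) = length a \<and> ks (foldr push a b) < ks a)"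
          proof -
            have "2 * m \<le> length a" using n1(1) l1 by simp
            then show ?thesis using tie[OF ra rb m l1 l2'] \<open>even (length a)\<close> by blast
          qed
          then show False using nm[OF a b ab abr] by auto
        qed
      qed
      have Sprops: "\<forall>a\<in>S. reduced a \<and> a \<noteq> []" using Sred Sne by blast
      have Srr: "\<forall>a\<in>S. reduced a \<and> rev a \<in> S" using Sred Srev by blast
      have short: "\<forall>a\<in>set L'. length a \<le> 2"
        if "x \<in> {[S1, S2], [S2, S3]}" "set L' \<subseteq> S" "noadj L'" "prodl L' = x" for x L'
      proof -
        have "L' \<noteq> []" using that by auto
        then show ?thesis using PL[OF Sprops N2 N3, of L'] that by auto
      qed
      obtain L where L: "set L \<subseteq> S" "prodl L = [S1, S2]" using xS(1) by (auto simp: prods_def)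
      obtain L' where L': "set L' \<subseteq> S" "noadj L'" "prodl L' = [S1, S2]"
        using reduce_list[OF L(1) Srr] L(2) by auto
      obtain M where M: "set M \<subseteq> S" "prodl M = [S2, S3]" using xS(2) by (auto simp: prods_def)
      obtain M' where M': "set M' \<subseteq> S" "noadj M'" "prodl M' = [S2, S3]"
        using reduce_list[OF M(1) Srr] M(2) by auto
      have sL: "\<forall>a\<in>set L'. length a \<le> 2" using short[of "[S1, S2]" L'] L' by simp
      have sM: "\<forall>a\<in>set M'. length a \<le> 2" using short[of "[S2, S3]" M'] M' by simp
      have ly: "length y = 2"
      proof (rule ccontr)
        assume "length y \<noteq> 2"
        moreover obtain m where "length y = 2 * m" "m > 0" using ry yne even_pos by blast
        ultimately have gt: "length y > 2" by simp
        have "set L' \<subseteq> {[], z, rev z}"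
        proof
          fix x assume x: "x \<in> set L'"
          then have "x \<in> {y, rev y, z, rev z}" "length x \<le> 2" using L'(1) sL S_eq by auto
          moreover have "x \<noteq> y" "x \<noteq> rev y" using \<open>length x \<le> 2\<close> gt by auto
          ultimately show "x \<in> {[], z, rev z}" by auto
        qed
        moreover have "set M' \<subseteq> {[], z, rev z}"
        proof
          fix x assume x: "x \<in> set M'"
          then have "x \<in> {y, rev y, z, rev z}" "length x \<le> 2" using M'(1) sM S_eq by auto
          moreover have "x \<noteq> y" "x \<noteq> rev y" using \<open>length x \<le> 2\<close> gt by auto
          ultimately show "x \<in> {[], z, rev z}" by auto
        qed
        ultimately have "[S1, S2] \<in> prods {[], z, rev z} \<and> [S2, S3] \<in> prods {[], z, rev z}"
          using L'(3) M'(3) unfolding prods_def by (metis (mono_tags, lifting) mem_Collect_eq)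
        then show False using no_cyclic[OF rz(1), of "{[], z, rev z}"] by blast
      qed
      have lz: "length z = 2"
      proof (rule ccontr)
        assume "length z \<noteq> 2"
        moreover obtain m where "length z = 2 * m" "m > 0" using rz zne even_pos by blast
        ultimately have gt: "length z > 2" by simp
        have "set L' \<subseteq> {[], y, rev y}"
        proof
          fix x assume x: "x \<in> set L'"
          then have "x \<in> {y, rev y, z, rev z}" "length x \<le> 2" using L'(1) sL S_eq by auto
          moreover have "x \<noteq> z" "x \<noteq> rev z" using \<open>length x \<le> 2\<close> gt by auto
          ultimately show "x \<in> {[], y, rev y}" by auto
        qed
        moreover have "set M' \<subseteq> {[], y, rev y}"
        proof
          fix x assume x: "x \<in> set M'"
          then have "x \<in> {y, rev y, z, rev z}" "length x \<le> 2" using M'(1) sM S_eq by auto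
          moreover have "x \<noteq> z" "x \<noteq> rev z" using \<open>length x \<le> 2\<close> gt by auto
          ultimately show "x \<in> {[], y, rev y}" by auto
        qed
        ultimately have "[S1, S2] \<in> prods {[], y, rev y} \<and> [S2, S3] \<in> prods {[], y, rev y}"
          using L'(3) M'(3) unfolding prods_def by (metis (mono_tags, lifting) mem_Collect_eq)
        then show False using no_cyclic[OF ry(1), of "{[], y, rev y}"] by blast
      qed
      show False using P_len2[OF ry(1) ly rz(1) lz] nP by simp
    qed
  qed
qed

lemma main_lemma: "y \<in> ker_eps \<Longrightarrow> z \<in> ker_eps \<Longrightarrow> G y z \<Longrightarrow> P y z"
  using nielsen_aux by blast


lemma X_red: "\<forall>x\<in>{xa, xb, inv\<^bsub>W3\<^esub> xa, inv\<^bsub>W3\<^esub> xb}. reduced x"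
  by (simp add: xa_def xb_def)

lemma K_prods: "k \<in> ker_eps \<Longrightarrow> k \<in> prods {xa, xb, inv\<^bsub>W3\<^esub> xa, inv\<^bsub>W3\<^esub> xb}"
proof (induction rule: K_induct)
  case Nil
  show ?case unfolding prods_def by (rule CollectI, rule exI[of _ "[]"]) simp
next
  case (Step a b k)
  let ?X = "{xa, xb, inv\<^bsub>W3\<^esub> xa, inv\<^bsub>W3\<^esub> xb}"
  have s: "x \<in> ?X \<Longrightarrow> x \<in> prods ?X" for x using X_red by (intro prods_single) auto
  have "[a, b] \<in> prods ?X"
    using pairs[OF Step(1)] s prods_mult[OF X_red] by auto
  then show ?case using Step(3) prods_mult[OF X_red] by blast
qed

context
  fixes \<alpha> assumes A: "autK \<alpha>"
begin

interpretation a: autK \<alpha> by (rule A)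

lemma alpha_prodl: "set L \<subseteq> ker_eps \<Longrightarrow> prodl L \<in> ker_eps \<and> \<alpha> (prodl L) = prodl (map \<alpha> L)"
proof (induction L)
  case Nil
  have "[] \<in> ker_eps" by (simp add: K_mem)
  then show ?case using a.one by simp
next
  case (Cons a L)
  then have aK: "a \<in> ker_eps" and IH: "prodl L \<in> ker_eps" "\<alpha> (prodl L) = prodl (map \<alpha> L)" by auto
  have "prodl (a # L) = a \<cdot> prodl L" by (rule prodl_m)
  moreover have "a \<cdot> prodl L \<in> ker_eps" using aK IH(1) by (rule mK)
  moreover have "\<alpha> (a \<cdot> prodl L) = \<alpha> a \<cdot> prodl (map \<alpha> L)" using a.mul[OF aK IH(1)] IH(2) by simp
  moreover have "prodl (map \<alpha> (a # L)) = \<alpha> a \<cdot> prodl (map \<alpha> L)" by (simp only: list.map(2) prodl_m)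
  ultimately show ?case by simp
qed

lemma G_alpha: "G (\<alpha> xa) (\<alpha> xb)"
  unfolding G_def
proof
  fix k assume k: "k \<in> ker_eps"
  obtain l where l: "l \<in> ker_eps" "\<alpha> l = k" using a.surj[OF k] by blast
  obtain L where L: "set L \<subseteq> {xa, xb, inv\<^bsub>W3\<^esub> xa, inv\<^bsub>W3\<^esub> xb}" "prodl L = l"
    using K_prods[OF l(1)] by (auto simp: prods_def)
  have XK: "{xa, xb, inv\<^bsub>W3\<^esub> xa, inv\<^bsub>W3\<^esub> xb} \<subseteq> ker_eps" using invK by simp
  have "set L \<subseteq> ker_eps" using L(1) XK by blast
  then have "\<alpha> l = prodl (map \<alpha> L)" using alpha_prodl[of L] L(2) by blast
  moreover have "set (map \<alpha> L) \<subseteq> Sset (\<alpha> xa) (\<alpha> xb)"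
    using L(1) a.inv[of xa] a.inv[of xb] by (auto simp: Sset_def)
  ultimately show "k \<in> prods (Sset (\<alpha> xa) (\<alpha> xb))" using l(2) unfolding prods_def by blast
qed

lemma H: "\<exists>t. reduced t \<and> t \<cdot> t = [] \<and> inverts t (\<alpha> xa) \<and> inverts t (\<alpha> xb)"
  using main_lemma[OF a.closed[OF xa_K] a.closed[OF xb_K] G_alpha] by (simp add: P_def)

end

theorem lemma2p3:
  shows "iota \<in> iso (AutoGroup W3) (AutoGroup (W3\<lparr>carrier := ker_eps\<rparr>))"
proof -
  have cA: "carrier (AutoGroup W3) = auto W3" "carrier (AutoGroup K') = auto K'"
    by (simp_all add: AutoGroup_def BijGroup_def)
  have "iota ` auto W3 = auto K'"
  proof
    show "iota ` auto W3 \<subseteq> auto K'" using autW.iota_auto autW_iff by blast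
    show "auto K' \<subseteq> iota ` auto W3"
    proof
      fix \<alpha> assume "\<alpha> \<in> auto K'"
      then have A: "autK \<alpha>" by (simp add: autK_def)
      obtain t where t: "reduced t" "t \<cdot> t = []" "inverts t (\<alpha> xa)" "inverts t (\<alpha> xb)"
        using H[OF A] by blast
      have tc: "t \<in> carrier W3" using t by simp
      have tt: "t \<cdot> t = \<one>\<^bsub>W3\<^esub>" using t by simp
      have ta: "t \<cdot> \<alpha> xa \<cdot> t = inv\<^bsub>W3\<^esub> (\<alpha> xa)" and tb: "t \<cdot> \<alpha> xb \<cdot> t = inv\<^bsub>W3\<^esub> (\<alpha> xb)"
        using t by (simp_all add: inverts_def)
      have "ext \<alpha> t \<in> auto W3" by (rule ext_auto[OF A tc tt ta tb])
      moreover have "iota (ext \<alpha> t) = \<alpha>" by (rule iota_ext[OF A tc tt ta tb])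
      ultimately show "\<alpha> \<in> iota ` auto W3" by (metis image_eqI)
    qed
  qed
  then have "bij_betw iota (auto W3) (auto K')" using iota_inj by (simp add: bij_betw_def)
  then show ?thesis using iota_hom cA by (simp add: iso_def)
qed


end
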